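(* Let $p$ be a prime, let $\Gamma$ be a finite connected $p$-valent arc-transitive graph, and let $G\le \mathrm{Aut}(\Gamma)$ be a solvable group acting transitively on the arcs of $\Gamma$. Then $G$, as a permutation group on the vertex set of $\Gamma$, has the EKR property.
   Context: For a permutation group $G$ on a finite set $V$, a subset $\mathcal{F}\subseteq G$ is intersecting if for all $g,h\in\mathcal{F}$ there is $v\in V$ with $g(v)=h(v)$. $G$ has the Erdős–Ko–Rado (EKR) property if the maximum size of an intersecting set of $G$ equals the maximum order of a point stabilizer $G_v$, $v\in V$. *)

theory Defs
  imports "HOL-Computational_Algebra.Primes" "HOL-Algebra.Solvable_Groups" "HOL-Combinatorics.Permutations"
begin

definition simple_graph :: "'a set \<Rightarrow> ('a \<Rightarrow> 'a \<Rightarrow> bool) \<Rightarrow> bool" where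
  "simple_graph V E \<longleftrightarrow> finite V \<and> (\<forall>u v. E u v \<longrightarrow> u \<in> V \<and> v \<in> V)
     \<and> (\<forall>u v. E u v \<longrightarrow> E v u) \<and> (\<forall>v. \<not> E v v)"

definition connected_graph :: "'a set \<Rightarrow> ('a \<Rightarrow> 'a \<Rightarrow> bool) \<Rightarrow> bool" where
  "connected_graph V E \<longleftrightarrow> V \<noteq> {} \<and> (\<forall>u\<in>V. \<forall>v\<in>V. E\<^sup>*\<^sup>* u v)"

definition regular_graph :: "'a set \<Rightarrow> ('a \<Rightarrow> 'a \<Rightarrow> bool) \<Rightarrow> nat \<Rightarrow> bool" where
  "regular_graph V E k \<longleftrightarrow> (\<forall>v\<in>V. card {w. E v w} = k)"

definition graph_aut :: "'a set \<Rightarrow> ('a \<Rightarrow> 'a \<Rightarrow> bool) \<Rightarrow> ('a \<Rightarrow> 'a) \<Rightarrow> bool" where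
  "graph_aut V E f \<longleftrightarrow> f permutes V \<and> (\<forall>u v. E u v \<longleftrightarrow> E (f u) (f v))"

definition perm_monoid :: "('a \<Rightarrow> 'a) set \<Rightarrow> ('a \<Rightarrow> 'a) monoid" where
  "perm_monoid G = \<lparr>carrier = G, monoid.mult = (\<circ>), one = id\<rparr>"

definition arcs :: "('a \<Rightarrow> 'a \<Rightarrow> bool) \<Rightarrow> ('a \<times> 'a) set" where
  "arcs E = {(u, v). E u v}"

definition arc_transitive_on :: "('a \<Rightarrow> 'a \<Rightarrow> bool) \<Rightarrow> ('a \<Rightarrow> 'a) set \<Rightarrow> bool" where
  "arc_transitive_on E G \<longleftrightarrow>
     (\<forall>a\<in>arcs E. \<forall>b\<in>arcs E. \<exists>g\<in>G. (g (fst a), g (snd a)) = b)"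

definition intersecting :: "'a set \<Rightarrow> ('a \<Rightarrow> 'a) set \<Rightarrow> bool" where
  "intersecting V F \<longleftrightarrow> (\<forall>g\<in>F. \<forall>h\<in>F. \<exists>v\<in>V. g v = h v)"

definition stabilizer :: "('a \<Rightarrow> 'a) set \<Rightarrow> 'a \<Rightarrow> ('a \<Rightarrow> 'a) set" where
  "stabilizer G v = {g \<in> G. g v = v}"

definition EKR :: "'a set \<Rightarrow> ('a \<Rightarrow> 'a) set \<Rightarrow> bool" where
  "EKR V G \<longleftrightarrow>
     Max {card F | F. F \<subseteq> G \<and> intersecting V F} = Max {card (stabilizer G v) | v. v \<in> V}"

end

theory Submission
  imports Defs
begin
lemma (in group) inv_cancel_left_aux:
  assumes "g \<in> carrier G" "z \<in> carrier G"
  shows "inv g \<otimes> (g \<otimes> z) = z"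
  using assms by (simp add: m_assoc[symmetric])

lemma (in group) conj_mult:
  assumes "g \<in> carrier G" "x \<in> carrier G" "y \<in> carrier G"
  shows "g \<otimes> (x \<otimes> y) \<otimes> inv g = (g \<otimes> x \<otimes> inv g) \<otimes> (g \<otimes> y \<otimes> inv g)"
proof -
  have "(g \<otimes> x \<otimes> inv g) \<otimes> (g \<otimes> y \<otimes> inv g) = g \<otimes> x \<otimes> (inv g \<otimes> g) \<otimes> y \<otimes> inv g"
    using assms by (simp add: m_assoc inv_cancel_left_aux)
  also have "\<dots> = g \<otimes> (x \<otimes> y) \<otimes> inv g" using assms by (simp add: m_assoc inv_cancel_left_aux)
  finally show ?thesis by simp
qed

lemma (in group) conj_inv:
  assumes "g \<in> carrier G" "x \<in> carrier G"
  shows "g \<otimes> inv x \<otimes> inv g = inv (g \<otimes> x \<otimes> inv g)"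
  using assms by (simp add: inv_mult_group m_assoc)

lemma (in group) derived_conj_closed:
  assumes H: "H \<subseteq> carrier G" and cl: "\<And>g h. g \<in> carrier G \<Longrightarrow> h \<in> H \<Longrightarrow> g \<otimes> h \<otimes> inv g \<in> H"
    and g: "g \<in> carrier G" and h: "h \<in> derived G H"
  shows "g \<otimes> h \<otimes> inv g \<in> derived G H"
proof -
  have dsc: "derived_set G H \<subseteq> carrier G" using derived_set_in_carrier[OF H] .
  have ds: "g \<otimes> x \<otimes> inv g \<in> derived_set G H" if x: "x \<in> derived_set G H" for x
  proof -
    from x obtain h1 where h1: "h1 \<in> H" and "x \<in> (\<Union>h2 \<in> H. { h1 \<otimes> h2 \<otimes> (inv h1) \<otimes> (inv h2) })" by (rule UN_E)
    then obtain h2 where h2: "h2 \<in> H" and xe: "x = h1 \<otimes> h2 \<otimes> inv h1 \<otimes> inv h2" by (auto elim: UN_E)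
    note h12 = h1 h2
    have c: "h1 \<in> carrier G" "h2 \<in> carrier G" using h12 H by auto
    have eq: "g \<otimes> x \<otimes> inv g = (g \<otimes> h1 \<otimes> inv g) \<otimes> (g \<otimes> h2 \<otimes> inv g) \<otimes> inv (g \<otimes> h1 \<otimes> inv g) \<otimes> inv (g \<otimes> h2 \<otimes> inv g)"
    proof -
      have e1: "g \<otimes> x \<otimes> inv g = (g \<otimes> (h1 \<otimes> h2 \<otimes> inv h1) \<otimes> inv g) \<otimes> (g \<otimes> inv h2 \<otimes> inv g)"
        unfolding xe by (rule conj_mult[OF g]) (use c in auto)
      have e2: "g \<otimes> (h1 \<otimes> h2 \<otimes> inv h1) \<otimes> inv g = (g \<otimes> (h1 \<otimes> h2) \<otimes> inv g) \<otimes> (g \<otimes> inv h1 \<otimes> inv g)"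
        by (rule conj_mult[OF g]) (use c in auto)
      have e3: "g \<otimes> (h1 \<otimes> h2) \<otimes> inv g = (g \<otimes> h1 \<otimes> inv g) \<otimes> (g \<otimes> h2 \<otimes> inv g)"
        by (rule conj_mult[OF g c])
      have e4: "g \<otimes> inv h1 \<otimes> inv g = inv (g \<otimes> h1 \<otimes> inv g)" by (rule conj_inv[OF g c(1)])
      have e5: "g \<otimes> inv h2 \<otimes> inv g = inv (g \<otimes> h2 \<otimes> inv g)" by (rule conj_inv[OF g c(2)])
      show ?thesis unfolding e1 e2 e3 e4 e5 by (rule refl)
    qed
    have m: "(g \<otimes> h1 \<otimes> inv g) \<otimes> (g \<otimes> h2 \<otimes> inv g) \<otimes> inv (g \<otimes> h1 \<otimes> inv g) \<otimes> inv (g \<otimes> h2 \<otimes> inv g) \<in> derived_set G H"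
      by (rule UN_I[OF cl[OF g h12(1)]], rule UN_I[OF cl[OF g h12(2)]], simp)
    show ?thesis by (simp only: eq m)
  qed
  from h show ?thesis unfolding derived_def
  proof (induction rule: generate.induct)
    case one then show ?case using g by (simp add: generate.one)
  next
    case (incl h) show ?case using ds[OF incl] by (rule generate.incl)
  next
    case (inv h)
    have "h \<in> carrier G" using inv dsc by auto
    then have "g \<otimes> inv h \<otimes> inv g = inv (g \<otimes> h \<otimes> inv g)" by (rule conj_inv[OF g])
    moreover have "inv (g \<otimes> h \<otimes> inv g) \<in> generate G (derived_set G H)" by (rule generate.inv[OF ds[OF inv]])
    ultimately show ?case by simp
  next
    case (eng h1 h2)
    have c: "h1 \<in> carrier G" "h2 \<in> carrier G"
      using eng(1,2) generate_incl[OF dsc] by auto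
    show ?case using generate.eng[OF eng(3,4)] by (simp only: conj_mult[OF g c])
  qed
qed

lemma (in group) derived_pow_conj_closed:
  assumes g: "g \<in> carrier G" and h: "h \<in> (derived G ^^ n) (carrier G)"
  shows "g \<otimes> h \<otimes> inv g \<in> (derived G ^^ n) (carrier G)"
  using g h
proof (induction n arbitrary: g h)
  case 0 then show ?case by simp
next
  case (Suc n)
  have sub: "(derived G ^^ n) (carrier G) \<subseteq> carrier G" using exp_of_derived_in_carrier by blast
  have "g \<otimes> h \<otimes> inv g \<in> derived G ((derived G ^^ n) (carrier G))"
    using derived_conj_closed[OF sub Suc.IH] Suc.prems by simp
  then show ?case by simp
qed

lemma (in group) solvable_abelian_normal:
  assumes solv: "solvable G" and S1: "\<one> \<in> S" and nS: "\<not> carrier G \<subseteq> S"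
  shows "\<exists>N. subgroup N G \<and> (\<forall>g\<in>carrier G. \<forall>n\<in>N. g \<otimes> n \<otimes> inv g \<in> N) \<and> \<not> N \<subseteq> S
           \<and> (\<forall>a\<in>N. \<forall>b\<in>N. a \<otimes> b \<otimes> inv a \<otimes> inv b \<in> S)"
proof -
  define D where "D = (\<lambda>n. (derived G ^^ n) (carrier G))"
  obtain n where n: "D n = {\<one>}"
    using solvable_iff_trivial_derived_seq[THEN iffD1, OF solv] unfolding D_def by (rule exE)
  have Pn: "D n \<subseteq> S" using n S1 by simp
  define m where "m = (LEAST m. D m \<subseteq> S)"
  have m: "D m \<subseteq> S" unfolding m_def by (rule LeastI[of _ n], rule Pn)
  have m0: "m \<noteq> 0"
  proof
    assume "m = 0" then have "D 0 \<subseteq> S" using m by simp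
    then show False using nS D_def by simp
  qed
  then obtain k where k: "m = Suc k" using not0_implies_Suc by blast
  have nk: "\<not> D k \<subseteq> S"
  proof
    assume "D k \<subseteq> S"
    then have "m \<le> k" unfolding m_def by (rule Least_le)
    then show False using k by simp
  qed
  have sub: "subgroup (D k) G" unfolding D_def by (rule exp_of_derived_is_subgroup[OF subgroup_self])
  have DS: "D (Suc k) = derived G (D k)" unfolding D_def by simp
  have comm: "\<forall>a\<in>D k. \<forall>b\<in>D k. a \<otimes> b \<otimes> inv a \<otimes> inv b \<in> S"
  proof (intro ballI)
    fix a b assume a: "a \<in> D k" and b: "b \<in> D k"
    have "a \<otimes> b \<otimes> inv a \<otimes> inv b \<in> derived_set G (D k)"
      by (rule UN_I[OF a], rule UN_I[OF b], simp)
    then have "a \<otimes> b \<otimes> inv a \<otimes> inv b \<in> D (Suc k)" unfolding DS derived_def by (rule generate.incl)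
    then show "a \<otimes> b \<otimes> inv a \<otimes> inv b \<in> S" using m k by blast
  qed
  have nrm: "\<forall>g\<in>carrier G. \<forall>n\<in>D k. g \<otimes> n \<otimes> inv g \<in> D k"
    unfolding D_def by (intro ballI, rule derived_pow_conj_closed)
  show ?thesis
    by (rule exI[of _ "D k"], intro conjI, rule sub, rule nrm, rule nk, rule comm)
qed

definition isclique :: "('g, 'b) monoid_scheme \<Rightarrow> 'v set \<Rightarrow> ('g \<Rightarrow> 'v \<Rightarrow> 'v) \<Rightarrow> 'g set \<Rightarrow> bool" where
  "isclique G V act C \<longleftrightarrow> C \<subseteq> carrier G \<and> card C = card V \<and>
     (\<forall>c\<in>C. \<forall>d\<in>C. c \<noteq> d \<longrightarrow> (\<forall>v\<in>V. act c v \<noteq> act d v))"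

locale gs = group G for G (structure) +
  fixes p :: nat and V :: "'v set" and E :: "'v \<Rightarrow> 'v \<Rightarrow> bool" and act :: "'g \<Rightarrow> 'v \<Rightarrow> 'v"
  assumes prime: "prime p"
    and fin: "finite V" and ne: "V \<noteq> {}"
    and E_V1: "E u v \<Longrightarrow> u \<in> V" and E_V2: "E u v \<Longrightarrow> v \<in> V"
    and Esym: "E u v \<Longrightarrow> E v u"
    and Eirr: "\<not> E v v"
    and conn: "u \<in> V \<Longrightarrow> v \<in> V \<Longrightarrow> E\<^sup>*\<^sup>* u v"
    and reg: "v \<in> V \<Longrightarrow> card {w. E v w} = p"
    and act_in: "g \<in> carrier G \<Longrightarrow> v \<in> V \<Longrightarrow> act g v \<in> V"
    and act_mult: "g \<in> carrier G \<Longrightarrow> h \<in> carrier G \<Longrightarrow> v \<in> V \<Longrightarrow> act (g \<otimes> h) v = act g (act h v)"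
    and act_one: "v \<in> V \<Longrightarrow> act \<one> v = v"
    and act_E: "g \<in> carrier G \<Longrightarrow> E u v \<Longrightarrow> E (act g u) (act g v)"
    and arc: "E u v \<Longrightarrow> E u' v' \<Longrightarrow> \<exists>g\<in>carrier G. act g u = u' \<and> act g v = v'"
begin

definition orb :: "'g set \<Rightarrow> 'v \<Rightarrow> 'v set" where
  "orb N x = {act n x | n. n \<in> N}"

definition nrm :: "'g set \<Rightarrow> bool" where
  "nrm N \<longleftrightarrow> (\<forall>g\<in>carrier G. \<forall>n\<in>N. g \<otimes> n \<otimes> inv g \<in> N)"

definition abl :: "'g set \<Rightarrow> bool" where
  "abl N \<longleftrightarrow> (\<forall>a\<in>N. \<forall>b\<in>N. \<forall>v\<in>V. act a (act b v) = act b (act a v))"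

lemma act_inv1: "g \<in> carrier G \<Longrightarrow> v \<in> V \<Longrightarrow> act (inv g) (act g v) = v"
  using act_mult[of "inv g" g v] act_one by simp

lemma act_inv2: "g \<in> carrier G \<Longrightarrow> v \<in> V \<Longrightarrow> act g (act (inv g) v) = v"
  using act_mult[of g "inv g" v] act_one by simp

lemma act_inj: "g \<in> carrier G \<Longrightarrow> u \<in> V \<Longrightarrow> v \<in> V \<Longrightarrow> act g u = act g v \<Longrightarrow> u = v"
proof -
  assume a: "g \<in> carrier G" "u \<in> V" "v \<in> V" "act g u = act g v"
  have "act (inv g) (act g u) = act (inv g) (act g v)" using a by simp
  then show "u = v" using act_inv1[OF a(1) a(2)] act_inv1[OF a(1) a(3)] by simp
qed

lemma nbrs_fin: "finite {w. E v w}"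
proof (rule finite_subset[OF _ fin])
  show "{w. E v w} \<subseteq> V" using E_V2 by blast
qed

lemma p_gt1: "p > 1" using prime prime_gt_1_nat by blast

lemma has_nbr: "v \<in> V \<Longrightarrow> \<exists>w. E v w"
proof (rule ccontr)
  assume v: "v \<in> V" and "\<not> (\<exists>w. E v w)"
  then have "{w. E v w} = {}" by auto
  then show False using reg[OF v] p_gt1 by simp
qed

lemma vtrans: assumes u: "u \<in> V" and v: "v \<in> V" shows "\<exists>g\<in>carrier G. act g u = v"
proof -
  obtain u' where u': "E u u'" using has_nbr[OF u] by blast
  obtain v' where v': "E v v'" using has_nbr[OF v] by blast
  show ?thesis using arc[OF u' v'] by blast
qed

lemma nontriv: "\<exists>g\<in>carrier G. \<exists>v\<in>V. act g v \<noteq> v"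
proof -
  obtain v where v: "v \<in> V" using ne by blast
  obtain w where w: "E v w" using has_nbr[OF v] by blast
  obtain g where g: "g \<in> carrier G" "act g v = w" "act g w = v" using arc[OF w Esym[OF w]] by blast
  have "w \<noteq> v" using w Eirr by metis
  then show ?thesis using g v by auto
qed

lemma act_cong_inv:
  assumes a: "a \<in> carrier G" and b: "b \<in> carrier G" and eq: "\<forall>x\<in>V. act a x = act b x" and x: "x \<in> V"
  shows "act (inv a) x = act (inv b) x"
proof -
  have y: "act (inv b) x \<in> V" using act_in b x by simp
  have "act (inv a) x = act (inv a) (act b (act (inv b) x))" using act_inv2[OF b x] by simp
  also have "\<dots> = act (inv a) (act a (act (inv b) x))" using eq y by simp
  also have "\<dots> = act (inv b) x" using act_inv1[OF a y] .
  finally show ?thesis .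
qed

context
  fixes N assumes sg: "subgroup N G"
begin

lemma N_car: "n \<in> N \<Longrightarrow> n \<in> carrier G" using sg subgroup.subset by blast

lemma orb_sub: "x \<in> V \<Longrightarrow> orb N x \<subseteq> V"
  unfolding orb_def using act_in N_car by blast

lemma orb_self: "x \<in> V \<Longrightarrow> x \<in> orb N x"
  unfolding orb_def using act_one subgroup.one_closed[OF sg] by force

lemma orb_trans: assumes x: "x \<in> V" and y: "y \<in> orb N x" and z: "z \<in> orb N y" shows "z \<in> orb N x"
proof -
  obtain n where n: "n \<in> N" "y = act n x" using y unfolding orb_def by blast
  obtain m where m: "m \<in> N" "z = act m y" using z unfolding orb_def by blast
  have "z = act (m \<otimes> n) x" using act_mult[OF N_car N_car x] m n by simp
  moreover have "m \<otimes> n \<in> N" using subgroup.m_closed[OF sg] m n by blast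
  ultimately show ?thesis unfolding orb_def by blast
qed

lemma orb_sym: assumes x: "x \<in> V" and y: "y \<in> orb N x" shows "x \<in> orb N y"
proof -
  obtain n where n: "n \<in> N" "y = act n x" using y unfolding orb_def by blast
  have "x = act (inv n) y" using act_inv1[OF N_car[OF n(1)] x] n by simp
  moreover have "inv n \<in> N" using subgroup.m_inv_closed[OF sg] n by blast
  ultimately show ?thesis unfolding orb_def by blast
qed

lemma orb_eq: assumes x: "x \<in> V" and y: "y \<in> orb N x" shows "orb N y = orb N x"
proof -
  have yV: "y \<in> V" using orb_sub[OF x] y by blast
  show ?thesis using orb_trans[OF x y] orb_trans[OF yV orb_sym[OF x y]] by blast
qed

lemma orb_disj: assumes x: "x \<in> V" and y: "y \<in> V" and z: "z \<in> orb N x" "z \<in> orb N y"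
  shows "orb N x = orb N y"
  using orb_eq[OF x z(1)] orb_eq[OF y z(2)] by simp

lemma orb_mem: "n \<in> N \<Longrightarrow> act n x \<in> orb N x" unfolding orb_def by blast

lemma orb_act: assumes nr: "nrm N" and g: "g \<in> carrier G" and x: "x \<in> V" and y: "y \<in> orb N x"
  shows "act g y \<in> orb N (act g x)"
proof -
  obtain n where n: "n \<in> N" "y = act n x" using y unfolding orb_def by blast
  have nc: "n \<in> carrier G" using N_car n by blast
  have c: "g \<otimes> n \<otimes> inv g \<in> N" using nr g n unfolding nrm_def by blast
  have "act (g \<otimes> n \<otimes> inv g) (act g x) = act g (act n (act (inv g) (act g x)))"
    using act_mult g nc x act_in by simp
  also have "\<dots> = act g y" using act_inv1[OF g x] n by simp
  finally show ?thesis using c orb_mem by metis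
qed

lemma agree_orb: assumes ab: "abl N" and a: "a \<in> N" and b: "b \<in> N" and z: "z \<in> V"
  and eq: "act a z = act b z" and y: "y \<in> orb N z"
  shows "act a y = act b y"
proof -
  obtain m where m: "m \<in> N" "y = act m z" using y unfolding orb_def by blast
  have "act a y = act m (act a z)" using ab a m z unfolding abl_def by simp
  also have "\<dots> = act b y" using ab b m z eq unfolding abl_def by simp
  finally show ?thesis .
qed

definition tau :: "'v \<Rightarrow> 'v \<Rightarrow> 'g" where
  "tau x0 y = (SOME n. n \<in> N \<and> act n x0 = y)"

lemma tau: assumes "y \<in> orb N x0" shows "tau x0 y \<in> N \<and> act (tau x0 y) x0 = y"
proof -
  have "\<exists>n. n \<in> N \<and> act n x0 = y" using assms unfolding orb_def by blast
  then show ?thesis unfolding tau_def by (rule someI_ex)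
qed

lemma tau_sep:
  assumes x0: "x0 \<in> V" and semi: "\<forall>n\<in>N. \<forall>v\<in>V. act n v = v \<longrightarrow> act n x0 = x0"
    and y: "y \<in> orb N x0" and y': "y' \<in> orb N x0" and ne: "y \<noteq> y'" and v: "v \<in> V"
  shows "act (tau x0 y) v \<noteq> act (tau x0 y') v"
proof
  assume eq: "act (tau x0 y) v = act (tau x0 y') v"
  define a where "a = tau x0 y" define b where "b = tau x0 y'"
  have a: "a \<in> N" "act a x0 = y" using tau[OF y] a_def by auto
  have b: "b \<in> N" "act b x0 = y'" using tau[OF y'] b_def by auto
  have ac: "a \<in> carrier G" and bc: "b \<in> carrier G" using a b N_car by auto
  have n: "inv b \<otimes> a \<in> N" using a b sg subgroup.m_closed subgroup.m_inv_closed by metis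
  have "act (inv b \<otimes> a) v = act (inv b) (act b v)" using act_mult[OF inv_closed[OF bc] ac v] eq a_def b_def by simp
  also have "\<dots> = v" using act_inv1[OF bc v] .
  finally have "act (inv b \<otimes> a) x0 = x0" using semi n v by blast
  then have "act (inv b) (act a x0) = x0" using act_mult[OF inv_closed[OF bc] ac x0] by simp
  then have "act b (act (inv b) (act a x0)) = act b x0" by simp
  then have "act a x0 = act b x0" using act_inv2[OF bc] act_in[OF ac x0] by simp
  then show False using a b ne by simp
qed

lemma tau_inj: "inj_on (tau x0) (orb N x0)"
proof (rule inj_onI)
  fix y y' assume y: "y \<in> orb N x0" and y': "y' \<in> orb N x0" and e: "tau x0 y = tau x0 y'"
  have "y = act (tau x0 y) x0" using tau[OF y] by simp
  also have "\<dots> = act (tau x0 y') x0" using e by simp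
  also have "\<dots> = y'" using tau[OF y'] by simp
  finally show "y = y'" .
qed

end

lemma case_a:
  assumes sg: "subgroup N G" and ab: "abl N" and tr: "\<forall>x\<in>V. orb N x = V"
  shows "\<exists>C. isclique G V act C"
proof -
  obtain x0 where x0: "x0 \<in> V" using ne by blast
  have semi: "\<forall>n\<in>N. \<forall>v\<in>V. act n v = v \<longrightarrow> act n x0 = x0"
  proof (intro ballI impI)
    fix n v assume n: "n \<in> N" and v: "v \<in> V" and fx: "act n v = v"
    have "x0 \<in> orb N v" using tr x0 v by blast
    then have "act n x0 = act \<one> x0"
      using agree_orb[OF sg ab n subgroup.one_closed[OF sg] v] fx act_one[OF v] by simp
    then show "act n x0 = x0" using act_one[OF x0] by simp
  qed
  define C where "C = tau N x0 ` V"
  have "isclique G V act C"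
    unfolding isclique_def
  proof (intro conjI)
    have oV: "orb N x0 = V" using tr x0 by blast
    show "C \<subseteq> carrier G"
    proof
      fix c assume "c \<in> C"
      then obtain y where y: "y \<in> V" "c = tau N x0 y" using C_def by blast
      have "y \<in> orb N x0" using y oV by simp
      then show "c \<in> carrier G" using tau[OF sg] N_car[OF sg] y(2) by blast
    qed
    show "card C = card V" unfolding C_def using card_image[OF tau_inj[OF sg, of x0]] oV by simp
    show "\<forall>c\<in>C. \<forall>d\<in>C. c \<noteq> d \<longrightarrow> (\<forall>v\<in>V. act c v \<noteq> act d v)"
    proof (intro ballI impI)
      fix c d v assume c: "c \<in> C" and d: "d \<in> C" and cd: "c \<noteq> d" and v: "v \<in> V"
      obtain y where y: "y \<in> V" "c = tau N x0 y" using c C_def by blast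
      obtain y' where y': "y' \<in> V" "d = tau N x0 y'" using d C_def by blast
      have "y \<noteq> y'" using y y' cd by blast
      then show "act c v \<noteq> act d v" using tau_sep[OF sg x0 semi, of y y' v] y y' oV v by simp
    qed
  qed
  then show ?thesis by blast
qed

end

context gs begin

lemma orbs_all:
  assumes sg: "subgroup N G" and nr: "nrm N" and u: "E u w" and wo: "w \<in> orb N u"
  shows "\<forall>x\<in>V. orb N x = V"
proof -
  have all: "b \<in> orb N a" if ab: "E a b" for a b
  proof -
    obtain g where g: "g \<in> carrier G" "act g u = a" "act g w = b" using arc[OF u ab] by blast
    have "act g w \<in> orb N (act g u)" by (rule orb_act[OF sg nr g(1) E_V1[OF u] wo])
    then show ?thesis using g by simp
  qed
  show ?thesis
  proof
    fix x assume x: "x \<in> V"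
    show "orb N x = V"
    proof
      show "orb N x \<subseteq> V" by (rule orb_sub[OF sg x])
      show "V \<subseteq> orb N x"
      proof
        fix y assume y: "y \<in> V"
        have "E\<^sup>*\<^sup>* x y" by (rule conn[OF x y])
        then show "y \<in> orb N x"
        proof (induction rule: rtranclp_induct)
          case base then show ?case by (rule orb_self[OF sg x])
        next
          case (step y z)
          have "z \<in> orb N y" by (rule all[OF step(2)])
          then show ?case using orb_trans[OF sg x step(3)] by blast
        qed
      qed
    qed
  qed
qed

lemma noedge:
  assumes sg: "subgroup N G" and nr: "nrm N" and nt: "\<not> (\<forall>x\<in>V. orb N x = V)" and u: "E u w"
  shows "w \<notin> orb N u"
  using orbs_all[OF sg nr u] nt by blast

lemma semireg_b:
  assumes sg: "subgroup N G" and s1: "\<forall>v w w'. E v w \<longrightarrow> E v w' \<longrightarrow> w' \<in> orb N w \<longrightarrow> w = w'"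
    and n: "n \<in> N" and v: "v \<in> V" and fx: "act n v = v" and x: "x \<in> V"
  shows "act n x = x"
proof -
  have nc: "n \<in> carrier G" by (rule N_car[OF sg n])
  have "E\<^sup>*\<^sup>* v x" by (rule conn[OF v x])
  then show ?thesis
  proof (induction rule: rtranclp_induct)
    case base then show ?case by (rule fx)
  next
    case (step y z)
    have "E (act n y) (act n z)" by (rule act_E[OF nc step(2)])
    then have e: "E y (act n z)" using step(3) by simp
    have o: "act n z \<in> orb N z" by (rule orb_mem[OF sg n])
    have "z = act n z" using s1 step(2) e o by blast
    then show ?case by simp
  qed
qed

lemma orb_card_le:
  assumes sg: "subgroup N G" and nr: "nrm N" and x: "x \<in> V" and y: "y \<in> V"
  shows "card (orb N x) \<le> card (orb N y)"
proof -
  obtain g where g: "g \<in> carrier G" "act g x = y" using vtrans[OF x y] by blast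
  show ?thesis
  proof (rule card_inj_on_le)
    show "inj_on (act g) (orb N x)"
    proof (rule inj_onI)
      fix a b assume a: "a \<in> orb N x" and b: "b \<in> orb N x" and e: "act g a = act g b"
      show "a = b" using act_inj[OF g(1) _ _ e] orb_sub[OF sg x] a b by blast
    qed
    show "act g ` orb N x \<subseteq> orb N y"
    proof
      fix z assume "z \<in> act g ` orb N x"
      then obtain a where a: "a \<in> orb N x" "z = act g a" by blast
      show "z \<in> orb N y" using orb_act[OF sg nr g(1) x a(1)] a(2) g(2) by simp
    qed
    show "finite (orb N y)" using orb_sub[OF sg y] fin finite_subset by blast
  qed
qed

lemma orb_card_eq:
  assumes sg: "subgroup N G" and nr: "nrm N" and x: "x \<in> V" and y: "y \<in> V"
  shows "card (orb N x) = card (orb N y)"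
  using orb_card_le[OF sg nr x y] orb_card_le[OF sg nr y x] by simp

lemma case_b:
  assumes IH: "\<And>(V'::'v set) E' act'. card V' < card V \<Longrightarrow> gs G p V' E' act' \<Longrightarrow> \<exists>C. isclique G V' act' C"
    and sg: "subgroup N G" and nr: "nrm N" and ntr: "\<exists>n\<in>N. \<exists>x\<in>V. act n x \<noteq> x"
    and nt: "\<not> (\<forall>x\<in>V. orb N x = V)"
    and s1: "\<forall>v w w'. E v w \<longrightarrow> E v w' \<longrightarrow> w' \<in> orb N w \<longrightarrow> w = w'"
  shows "\<exists>C. isclique G V act C"
proof -
  have noE: "w \<notin> orb N u" if "E u w" for u w using noedge[OF sg nr nt that] .
  define rep where "rep = (\<lambda>y. SOME z. z \<in> orb N y)"
  have rep_in: "rep y \<in> orb N y" if y: "y \<in> V" for y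
    unfolding rep_def by (rule someI[of _ y], rule orb_self[OF sg y])
  have repV: "rep y \<in> V" if y: "y \<in> V" for y using rep_in[OF y] orb_sub[OF sg y] by blast
  have rep_orb: "orb N (rep y) = orb N y" if y: "y \<in> V" for y by (rule orb_eq[OF sg y rep_in[OF y]])
  have rep_eq: "rep y = rep y'" if "orb N y = orb N y'" for y y' unfolding rep_def using that by simp
  have rep_eq_iff: "rep y = rep y' \<longleftrightarrow> orb N y = orb N y'" if y: "y \<in> V" and y': "y' \<in> V" for y y'
    using rep_eq rep_orb[OF y] rep_orb[OF y'] by metis
  have rep_rep: "rep (rep y) = rep y" if y: "y \<in> V" for y by (rule rep_eq[OF rep_orb[OF y]])
  define V' where "V' = rep ` V"
  define E' where "E' = (\<lambda>r r'. r \<in> V' \<and> r' \<in> V' \<and> (\<exists>u\<in>orb N r. \<exists>u'\<in>orb N r'. E u u'))"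
  define act' where "act' = (\<lambda>g r. rep (act g r))"
  have V'V: "V' \<subseteq> V" unfolding V'_def using repV by blast
  have rep_id: "rep r = r" if r: "r \<in> V'" for r using r rep_rep unfolding V'_def by blast
  have ornb: "E' r r' \<longleftrightarrow> r \<in> V' \<and> r' \<in> rep ` {w. E r w}" for r r'
  proof
    assume e: "E' r r'"
    then have r: "r \<in> V'" and r': "r' \<in> V'" and "\<exists>u\<in>orb N r. \<exists>u'\<in>orb N r'. E u u'" unfolding E'_def by auto
    then obtain u u' where u: "u \<in> orb N r" and u': "u' \<in> orb N r'" and uu: "E u u'" by blast
    obtain n where n: "n \<in> N" "u = act n r" using u unfolding orb_def by blast
    have nc: "n \<in> carrier G" by (rule N_car[OF sg n(1)])
    have inN: "inv n \<in> N" using subgroup.m_inv_closed[OF sg n(1)] .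
    have rV: "r \<in> V" using r V'V by blast
    have r'V: "r' \<in> V" using r' V'V by blast
    have u'V: "u' \<in> V" using E_V2[OF uu] .
    have "E (act (inv n) u) (act (inv n) u')" by (rule act_E[OF inv_closed[OF nc] uu])
    then have e2: "E r (act (inv n) u')" using n(2) act_inv1[OF nc rV] by simp
    have "act (inv n) u' \<in> orb N u'" by (rule orb_mem[OF sg inN])
    then have "orb N (act (inv n) u') = orb N r'"
      using orb_eq[OF sg u'V] orb_eq[OF sg r'V u'] by simp
    then have "rep (act (inv n) u') = r'" using rep_eq rep_id[OF r'] rep_orb[OF r'V] by metis
    then show "r \<in> V' \<and> r' \<in> rep ` {w. E r w}" using r e2 by blast
  next
    assume h: "r \<in> V' \<and> r' \<in> rep ` {w. E r w}"
    then obtain w where w: "E r w" "r' = rep w" by blast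
    have wV: "w \<in> V" using E_V2[OF w(1)] .
    have rV: "r \<in> V" using h V'V by blast
    have "r' \<in> V'" using w(2) wV V'_def by blast
    moreover have "w \<in> orb N r'" using w(2) rep_orb[OF wV] orb_self[OF sg wV] by simp
    moreover have "r \<in> orb N r" by (rule orb_self[OF sg rV])
    ultimately show "E' r r'" unfolding E'_def using h w(1) by blast
  qed
  have rep_act: "rep (act g (rep y)) = rep (act g y)" if g: "g \<in> carrier G" and y: "y \<in> V" for g y
  proof -
    have "rep y \<in> orb N y" by (rule rep_in[OF y])
    then have "act g (rep y) \<in> orb N (act g y)" by (rule orb_act[OF sg nr g y])
    then have "orb N (act g (rep y)) = orb N (act g y)" by (rule orb_eq[OF sg act_in[OF g y]])
    then show ?thesis by (rule rep_eq)
  qed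
  have gs': "gs G p V' E' act'"
  proof (intro gs.intro gs_axioms.intro)
    show "group G" by (rule is_group)
    show "prime p" by (rule prime)
    show "finite V'" unfolding V'_def using fin by simp
    show "V' \<noteq> {}" unfolding V'_def using ne by simp
    show "\<And>u v. E' u v \<Longrightarrow> u \<in> V'" unfolding E'_def by blast
    show "\<And>u v. E' u v \<Longrightarrow> v \<in> V'" unfolding E'_def by blast
    show "\<And>u v. E' u v \<Longrightarrow> E' v u" unfolding E'_def using Esym by blast
    show "\<And>v. \<not> E' v v"
    proof
      fix v assume "E' v v"
      then obtain u u' where v: "v \<in> V'" and u: "u \<in> orb N v" and u': "u' \<in> orb N v" and uu: "E u u'"
        unfolding E'_def by blast
      have vV: "v \<in> V" using v V'V by blast
      have "u' \<in> orb N u" using orb_eq[OF sg vV u] u' by simp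
      then show False using noE[OF uu] by blast
    qed
    show "\<And>u v. u \<in> V' \<Longrightarrow> v \<in> V' \<Longrightarrow> E'\<^sup>*\<^sup>* u v"
    proof -
      fix u v assume u: "u \<in> V'" and v: "v \<in> V'"
      have uV: "u \<in> V" using u V'V by blast
      have vV: "v \<in> V" using v V'V by blast
      have "E\<^sup>*\<^sup>* u v" by (rule conn[OF uV vV])
      then have "E'\<^sup>*\<^sup>* (rep u) (rep v)"
      proof (induction rule: rtranclp_induct)
        case base then show ?case by simp
      next
        case (step y z)
        have yV: "y \<in> V" using E_V1[OF step(2)] .
        have zV: "z \<in> V" using E_V2[OF step(2)] .
        have "y \<in> orb N (rep y)" using rep_orb[OF yV] orb_self[OF sg yV] by simp
        moreover have "z \<in> orb N (rep z)" using rep_orb[OF zV] orb_self[OF sg zV] by simp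
        moreover have "rep y \<in> V'" "rep z \<in> V'" unfolding V'_def using yV zV by auto
        ultimately have "E' (rep y) (rep z)" unfolding E'_def using step(2) by blast
        then show ?case by (rule rtranclp.rtrancl_into_rtrancl[OF step(3)])
      qed
      then show "E'\<^sup>*\<^sup>* u v" using rep_id[OF u] rep_id[OF v] by simp
    qed
    show "\<And>v. v \<in> V' \<Longrightarrow> card {w. E' v w} = p"
    proof -
      fix v assume v: "v \<in> V'"
      have vV: "v \<in> V" using v V'V by blast
      have "{w. E' v w} = rep ` {w. E v w}" using ornb v by blast
      moreover have "inj_on rep {w. E v w}"
      proof (rule inj_onI)
        fix a b assume a: "a \<in> {w. E v w}" and b: "b \<in> {w. E v w}" and e: "rep a = rep b"
        have aV: "a \<in> V" using a E_V2 by blast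
        have bV: "b \<in> V" using b E_V2 by blast
        have "orb N a = orb N b" using e rep_eq_iff[OF aV bV] by simp
        then have "b \<in> orb N a" using orb_self[OF sg bV] by simp
        then show "a = b" using s1 a b by blast
      qed
      ultimately show "card {w. E' v w} = p" using card_image reg[OF vV] by metis
    qed
    show "\<And>g v. g \<in> carrier G \<Longrightarrow> v \<in> V' \<Longrightarrow> act' g v \<in> V'"
      unfolding act'_def V'_def using act_in repV by blast
    show "\<And>g h v. g \<in> carrier G \<Longrightarrow> h \<in> carrier G \<Longrightarrow> v \<in> V' \<Longrightarrow> act' (g \<otimes> h) v = act' g (act' h v)"
    proof -
      fix g h v assume g: "g \<in> carrier G" and h: "h \<in> carrier G" and v: "v \<in> V'"
      have vV: "v \<in> V" using v V'V by blast
      have "act' g (act' h v) = rep (act g (rep (act h v)))" unfolding act'_def by simp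
      also have "\<dots> = rep (act g (act h v))" by (rule rep_act[OF g act_in[OF h vV]])
      also have "\<dots> = act' (g \<otimes> h) v" unfolding act'_def using act_mult[OF g h vV] by simp
      finally show "act' (g \<otimes> h) v = act' g (act' h v)" by simp
    qed
    show "\<And>v. v \<in> V' \<Longrightarrow> act' \<one> v = v"
      unfolding act'_def using act_one rep_id V'V by auto
    show "\<And>g u v. g \<in> carrier G \<Longrightarrow> E' u v \<Longrightarrow> E' (act' g u) (act' g v)"
    proof -
      fix g u v assume g: "g \<in> carrier G" and e: "E' u v"
      then obtain a b where u: "u \<in> V'" and v: "v \<in> V'" and a: "a \<in> orb N u" and b: "b \<in> orb N v" and ab: "E a b"
        unfolding E'_def by blast
      have uV: "u \<in> V" using u V'V by blast
      have vV: "v \<in> V" using v V'V by blast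
      have gu: "act g u \<in> V" by (rule act_in[OF g uV])
      have gv: "act g v \<in> V" by (rule act_in[OF g vV])
      have "act g a \<in> orb N (act g u)" by (rule orb_act[OF sg nr g uV a])
      then have 1: "act g a \<in> orb N (act' g u)" unfolding act'_def using rep_orb[OF gu] by simp
      have "act g b \<in> orb N (act g v)" by (rule orb_act[OF sg nr g vV b])
      then have 2: "act g b \<in> orb N (act' g v)" unfolding act'_def using rep_orb[OF gv] by simp
      have 3: "act' g u \<in> V'" "act' g v \<in> V'" unfolding act'_def V'_def using gu gv by auto
      show "E' (act' g u) (act' g v)" unfolding E'_def using 1 2 3 act_E[OF g ab] by blast
    qed
    show "\<And>u v u' v'. E' u v \<Longrightarrow> E' u' v' \<Longrightarrow> \<exists>g\<in>carrier G. act' g u = u' \<and> act' g v = v'"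
    proof -
      fix u v u' v' assume e: "E' u v" and e': "E' u' v'"
      obtain a b where u: "u \<in> V'" and v: "v \<in> V'" and a: "a \<in> orb N u" and b: "b \<in> orb N v" and ab: "E a b"
        using e unfolding E'_def by blast
      obtain a' b' where u': "u' \<in> V'" and v': "v' \<in> V'" and a': "a' \<in> orb N u'" and b': "b' \<in> orb N v'" and ab': "E a' b'"
        using e' unfolding E'_def by blast
      obtain g where g: "g \<in> carrier G" "act g a = a'" "act g b = b'" using arc[OF ab ab'] by blast
      have key: "act' g x = x'" if x: "x \<in> V'" and x': "x' \<in> V'" and c: "c \<in> orb N x" and c': "act g c = c'" and c'o: "c' \<in> orb N x'" for x x' c c'
      proof -
        have xV: "x \<in> V" using x V'V by blast
        have x'V: "x' \<in> V" using x' V'V by blast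
        have "act g c \<in> orb N (act g x)" by (rule orb_act[OF sg nr g(1) xV c])
        then have "orb N c' = orb N (act g x)" using orb_eq[OF sg act_in[OF g(1) xV]] c' by blast
        moreover have "orb N c' = orb N x'" by (rule orb_eq[OF sg x'V c'o])
        ultimately have "rep (act g x) = rep x'" using rep_eq by metis
        then show ?thesis unfolding act'_def using rep_id[OF x'] by simp
      qed
      show "\<exists>g\<in>carrier G. act' g u = u' \<and> act' g v = v'"
        using key[OF u u' a g(2) a'] key[OF v v' b g(3) b'] g(1) by blast
    qed
  qed
  have cardlt: "card V' < card V"
  proof -
    obtain n x where n: "n \<in> N" and x: "x \<in> V" and nx: "act n x \<noteq> x" using ntr by blast
    have nxV: "act n x \<in> V" by (rule act_in[OF N_car[OF sg n] x])
    have "orb N (act n x) = orb N x" by (rule orb_eq[OF sg x orb_mem[OF sg n]])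
    then have "rep (act n x) = rep x" by (rule rep_eq)
    then have "\<not> inj_on rep V" using nx nxV x unfolding inj_on_def by metis
    then have "card V' \<noteq> card V" unfolding V'_def using inj_on_iff_eq_card[OF fin] by metis
    moreover have "card V' \<le> card V" unfolding V'_def by (rule card_image_le[OF fin])
    ultimately show ?thesis by simp
  qed
  obtain C' where C': "isclique G V' act' C'" using IH[OF cardlt gs'] by blast
  have C'c: "C' \<subseteq> carrier G" and C'card: "card C' = card V'"
    and C'sep: "\<forall>c\<in>C'. \<forall>d\<in>C'. c \<noteq> d \<longrightarrow> (\<forall>v\<in>V'. act' c v \<noteq> act' d v)"
    using C' unfolding isclique_def by auto
  obtain x0 where x0: "x0 \<in> V" using ne by blast
  have semi: "\<forall>n\<in>N. \<forall>v\<in>V. act n v = v \<longrightarrow> act n x0 = x0"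
    using semireg_b[OF sg s1 _ _ _ x0] by blast
  define T where "T = orb N x0"
  define f where "f = (\<lambda>(c, y). c \<otimes> tau N x0 y)"
  define C where "C = f ` (C' \<times> T)"
  have tauT: "tau N x0 y \<in> N" "act (tau N x0 y) x0 = y" if "y \<in> T" for y
    using tau[OF sg, of y x0] that T_def by auto
  have fc: "f a \<in> carrier G" if a: "a \<in> C' \<times> T" for a
  proof -
    obtain c y where a': "a = (c, y)" "c \<in> C'" "y \<in> T" using a by blast
    show ?thesis unfolding a'(1) f_def using C'c a'(2) N_car[OF sg tauT(1)[OF a'(3)]] by auto
  qed
  have fsep: "act (f a) v \<noteq> act (f b) v" if a: "a \<in> C' \<times> T" and b: "b \<in> C' \<times> T" and ab: "a \<noteq> b" and v: "v \<in> V" for a b v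
  proof -
    obtain c y where a': "a = (c, y)" "c \<in> C'" "y \<in> T" using a by blast
    obtain d y' where b': "b = (d, y')" "d \<in> C'" "y' \<in> T" using b by blast
    have cc: "c \<in> carrier G" using C'c a'(2) by blast
    have dc: "d \<in> carrier G" using C'c b'(2) by blast
    have ty: "tau N x0 y \<in> carrier G" by (rule N_car[OF sg tauT(1)[OF a'(3)]])
    have ty': "tau N x0 y' \<in> carrier G" by (rule N_car[OF sg tauT(1)[OF b'(3)]])
    have fa: "act (f a) v = act c (act (tau N x0 y) v)" unfolding a'(1) f_def using act_mult[OF cc ty v] by simp
    have fb: "act (f b) v = act d (act (tau N x0 y') v)" unfolding b'(1) f_def using act_mult[OF dc ty' v] by simp
    have tyv: "act (tau N x0 y) v \<in> V" by (rule act_in[OF ty v])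
    have ty'v: "act (tau N x0 y') v \<in> V" by (rule act_in[OF ty' v])
    show ?thesis
    proof (cases "c = d")
      case True
      then have "y \<noteq> y'" using ab a'(1) b'(1) by simp
      then have "act (tau N x0 y) v \<noteq> act (tau N x0 y') v"
        using tau_sep[OF sg x0 semi, of y y' v] a'(3) b'(3) v T_def by simp
      then show ?thesis using fa fb True act_inj[OF dc tyv ty'v] by metis
    next
      case False
      have rv: "rep v \<in> V'" unfolding V'_def using v by blast
      have rvV: "rep v \<in> V" using repV[OF v] .
      have ne2: "act' c (rep v) \<noteq> act' d (rep v)" using C'sep a'(2) b'(2) False rv by blast
      show ?thesis
      proof
        assume eq: "act (f a) v = act (f b) v"
        have o1: "act (tau N x0 y) v \<in> orb N (rep v)"
          using orb_mem[OF sg tauT(1)[OF a'(3)], of v] rep_orb[OF v] by simp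
        have o2: "act (tau N x0 y') v \<in> orb N (rep v)"
          using orb_mem[OF sg tauT(1)[OF b'(3)], of v] rep_orb[OF v] by simp
        have z1: "act (f a) v \<in> orb N (act c (rep v))" unfolding fa by (rule orb_act[OF sg nr cc rvV o1])
        have z2: "act (f a) v \<in> orb N (act d (rep v))" unfolding eq fb by (rule orb_act[OF sg nr dc rvV o2])
        have "orb N (act c (rep v)) = orb N (act d (rep v))"
          by (rule orb_disj[OF sg act_in[OF cc rvV] act_in[OF dc rvV] z1 z2])
        then have "act' c (rep v) = act' d (rep v)" unfolding act'_def by (rule rep_eq)
        then show False using ne2 by simp
      qed
    qed
  qed
  have finj: "inj_on f (C' \<times> T)"
  proof (rule inj_onI)
    fix a b assume a: "a \<in> C' \<times> T" and b: "b \<in> C' \<times> T" and e: "f a = f b"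
    show "a = b"
    proof (rule ccontr)
      assume "a \<noteq> b"
      then show False using fsep[OF a b _ x0] e by simp
    qed
  qed
  have Tcard: "card (orb N x) = card T" if x: "x \<in> V" for x
    unfolding T_def by (rule orb_card_eq[OF sg nr x x0])
  have cardV: "card T * card V' = card V"
  proof -
    define P where "P = orb N ` V"
    have P1: "finite P" unfolding P_def using fin by simp
    have P2: "\<Union>P = V" unfolding P_def using orb_sub[OF sg] orb_self[OF sg] by blast
    have P3: "\<forall>c\<in>P. card c = card T" unfolding P_def using Tcard by blast
    have P4: "\<forall>c1\<in>P. \<forall>c2\<in>P. c1 \<noteq> c2 \<longrightarrow> c1 \<inter> c2 = {}" unfolding P_def using orb_disj[OF sg] by blast
    have "card T * card P = card (\<Union>P)" 
      by (rule card_partition, rule P1, simp add: P2 fin, use P3 in blast, use P4 in blast)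
    moreover have "card P = card V'"
    proof -
      have "P = orb N ` V'" unfolding P_def V'_def using rep_orb by (auto simp: image_iff)
      moreover have "inj_on (orb N) V'"
      proof (rule inj_onI)
        fix a b assume a: "a \<in> V'" and b: "b \<in> V'" and e: "orb N a = orb N b"
        show "a = b" using rep_eq[OF e] rep_id[OF a] rep_id[OF b] by simp
      qed
      ultimately show ?thesis by (simp add: card_image)
    qed
    ultimately show ?thesis using P2 by simp
  qed
  have "isclique G V act C" unfolding isclique_def
  proof (intro conjI)
    show "C \<subseteq> carrier G" unfolding C_def using fc by blast
    have "card C = card (C' \<times> T)" unfolding C_def by (rule card_image[OF finj])
    also have "\<dots> = card V' * card T" using C'card by (simp add: card_cartesian_product)
    finally show "card C = card V" using cardV by (simp add: mult.commute)
    show "\<forall>c\<in>C. \<forall>d\<in>C. c \<noteq> d \<longrightarrow> (\<forall>v\<in>V. act c v \<noteq> act d v)"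
      unfolding C_def using fsep by blast
  qed
  then show ?thesis by blast
qed

end

context gs begin

lemma two_orbits:
  assumes sg: "subgroup N G" and nr: "nrm N" and nt: "\<not> (\<forall>x\<in>V. orb N x = V)"
    and vw: "E v w" and vw': "E v w'" and ww': "w \<noteq> w'" and w'o: "w' \<in> orb N w"
  shows "V = orb N v \<union> orb N w \<and> orb N v \<inter> orb N w = {}
    \<and> (\<forall>a b. E a b \<longrightarrow> a \<in> orb N v \<longrightarrow> b \<in> orb N w) \<and> (\<forall>a b. E a b \<longrightarrow> a \<in> orb N w \<longrightarrow> b \<in> orb N v)"
proof -
  have vV: "v \<in> V" using E_V1[OF vw] .
  have wV: "w \<in> V" using E_V2[OF vw] .
  define Gv where "Gv = {y. E v y}"
  have Gvf: "finite Gv" unfolding Gv_def by (rule nbrs_fin)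
  have GvV: "Gv \<subseteq> V" unfolding Gv_def using E_V2 by blast
  have ple: "card (Gv \<inter> orb N y1) \<le> card (Gv \<inter> orb N y2)" if y1: "y1 \<in> Gv" and y2: "y2 \<in> Gv" for y1 y2
  proof -
    have e1: "E v y1" and e2: "E v y2" using y1 y2 Gv_def by auto
    obtain g where g: "g \<in> carrier G" "act g v = v" "act g y1 = y2" using arc[OF e1 e2] by blast
    have y1V: "y1 \<in> V" using E_V2[OF e1] .
    show ?thesis
    proof (rule card_inj_on_le)
      show "inj_on (act g) (Gv \<inter> orb N y1)"
        by (rule inj_onI) (use act_inj[OF g(1)] GvV in blast)
      show "act g ` (Gv \<inter> orb N y1) \<subseteq> Gv \<inter> orb N y2"
      proof
        fix z assume "z \<in> act g ` (Gv \<inter> orb N y1)"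
        then obtain a where a: "a \<in> Gv" "a \<in> orb N y1" "z = act g a" by blast
        have "E (act g v) (act g a)" using act_E[OF g(1)] a(1) Gv_def by blast
        then have "z \<in> Gv" using g(2) a(3) Gv_def by simp
        moreover have "z \<in> orb N y2" using orb_act[OF sg nr g(1) y1V a(2)] g(3) a(3) by simp
        ultimately show "z \<in> Gv \<inter> orb N y2" by blast
      qed
      show "finite (Gv \<inter> orb N y2)" using Gvf by simp
    qed
  qed
  define s where "s = card (Gv \<inter> orb N w)"
  have wG: "w \<in> Gv" using vw Gv_def by simp
  have pc: "card (Gv \<inter> orb N y) = s" if y: "y \<in> Gv" for y
    using ple[OF y wG] ple[OF wG y] s_def by simp
  define P where "P = (\<lambda>y. Gv \<inter> orb N y) ` Gv"
  have "s * card P = card (\<Union>P)"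
  proof (rule card_partition)
    show "finite P" unfolding P_def using Gvf by simp
    show "finite (\<Union>P)" unfolding P_def using Gvf by simp
    show "\<And>c. c \<in> P \<Longrightarrow> card c = s" unfolding P_def using pc by blast
    show "\<And>c1 c2. c1 \<in> P \<Longrightarrow> c2 \<in> P \<Longrightarrow> c1 \<noteq> c2 \<Longrightarrow> c1 \<inter> c2 = {}"
    proof -
      fix c1 c2 assume c1: "c1 \<in> P" and c2: "c2 \<in> P" and ne: "c1 \<noteq> c2"
      obtain y1 where y1: "y1 \<in> Gv" "c1 = Gv \<inter> orb N y1" using c1 P_def by blast
      obtain y2 where y2: "y2 \<in> Gv" "c2 = Gv \<inter> orb N y2" using c2 P_def by blast
      have y1V: "y1 \<in> V" and y2V: "y2 \<in> V" using y1 y2 GvV by auto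
      show "c1 \<inter> c2 = {}"
      proof (rule ccontr)
        assume "c1 \<inter> c2 \<noteq> {}"
        then obtain z where "z \<in> orb N y1" "z \<in> orb N y2" using y1 y2 by blast
        then have "orb N y1 = orb N y2" by (rule orb_disj[OF sg y1V y2V])
        then show False using ne y1 y2 by simp
      qed
    qed
  qed
  moreover have "\<Union>P = Gv" unfolding P_def using orb_self[OF sg] GvV by blast
  ultimately have sp: "s * card P = p" using reg[OF vV] Gv_def by simp
  have w'G: "w' \<in> Gv" using vw' Gv_def by simp
  have "card {w, w'} \<le> s" unfolding s_def
    by (rule card_mono) (use Gvf wG w'G w'o orb_self[OF sg wV] in auto)
  then have s2: "s \<ge> 2" using ww' by simp
  have "s dvd p" using sp by (metis dvd_triv_left)
  then have "s = p" using s2 prime unfolding prime_nat_iff by auto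
  then have "card (Gv \<inter> orb N w) = card Gv" using s_def reg[OF vV] Gv_def by simp
  then have "Gv \<inter> orb N w = Gv" by (rule card_subset_eq[OF Gvf, rotated], blast)
  then have step1: "E v y \<Longrightarrow> y \<in> orb N w" for y using Gv_def by blast
  have step2: "y' \<in> orb N y" if e: "E x y" and e': "E x y'" for x y y'
  proof -
    have xV: "x \<in> V" using E_V1[OF e] .
    obtain g where g: "g \<in> carrier G" "act g v = x" using vtrans[OF vV xV] by blast
    have ig: "inv g \<in> carrier G" using g(1) by simp
    have ix: "act (inv g) x = v" using act_inv1[OF g(1) vV] g(2) by simp
    have z: "E v (act (inv g) y)" using act_E[OF ig e] ix by simp
    have z': "E v (act (inv g) y')" using act_E[OF ig e'] ix by simp
    have yV: "y \<in> V" using E_V2[OF e] .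
    have y'V: "y' \<in> V" using E_V2[OF e'] .
    have zo: "act (inv g) y \<in> orb N w" by (rule step1[OF z])
    have z'o: "act (inv g) y' \<in> orb N w" by (rule step1[OF z'])
    have "act (inv g) y' \<in> orb N (act (inv g) y)" using orb_eq[OF sg wV zo] z'o by simp
    then have "act g (act (inv g) y') \<in> orb N (act g (act (inv g) y))"
      by (rule orb_act[OF sg nr g(1) act_in[OF ig yV]])
    then show ?thesis using act_inv2[OF g(1) yV] act_inv2[OF g(1) y'V] by simp
  qed
  have ed1: "b \<in> orb N w" if ab: "E a b" and a: "a \<in> orb N v" for a b
  proof -
    obtain n where n: "n \<in> N" "a = act n v" using a unfolding orb_def by blast
    have nc: "n \<in> carrier G" by (rule N_car[OF sg n(1)])
    have inN: "inv n \<in> N" by (rule subgroup.m_inv_closed[OF sg n(1)])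
    have bV: "b \<in> V" using E_V2[OF ab] .
    have "E (act (inv n) a) (act (inv n) b)" by (rule act_E[OF inv_closed[OF nc] ab])
    then have "E v (act (inv n) b)" using n(2) act_inv1[OF nc vV] by simp
    then have bo: "act (inv n) b \<in> orb N w" by (rule step1)
    have "b \<in> orb N (act (inv n) b)" by (rule orb_sym[OF sg bV orb_mem[OF sg inN]])
    then show ?thesis by (rule orb_trans[OF sg wV bo])
  qed
  have ed2: "b \<in> orb N v" if ab: "E a b" and a: "a \<in> orb N w" for a b
  proof -
    obtain n where n: "n \<in> N" "a = act n w" using a unfolding orb_def by blast
    have nc: "n \<in> carrier G" by (rule N_car[OF sg n(1)])
    have inN: "inv n \<in> N" by (rule subgroup.m_inv_closed[OF sg n(1)])
    have bV: "b \<in> V" using E_V2[OF ab] .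
    have "E (act (inv n) a) (act (inv n) b)" by (rule act_E[OF inv_closed[OF nc] ab])
    then have "E w (act (inv n) b)" using n(2) act_inv1[OF nc wV] by simp
    then have "act (inv n) b \<in> orb N v" using step2 Esym[OF vw] by blast
    moreover have "b \<in> orb N (act (inv n) b)" by (rule orb_sym[OF sg bV orb_mem[OF sg inN]])
    ultimately show ?thesis using orb_trans[OF sg vV] by blast
  qed
  have cover: "V \<subseteq> orb N v \<union> orb N w"
  proof
    fix x assume x: "x \<in> V"
    have "E\<^sup>*\<^sup>* v x" by (rule conn[OF vV x])
    then show "x \<in> orb N v \<union> orb N w"
    proof (induction rule: rtranclp_induct)
      case base then show ?case using orb_self[OF sg vV] by blast
    next
      case (step y z) then show ?case using ed1 ed2 by blast
    qed
  qed
  have disj: "orb N v \<inter> orb N w = {}"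
  proof (rule ccontr)
    assume "orb N v \<inter> orb N w \<noteq> {}"
    then obtain z where "z \<in> orb N v" "z \<in> orb N w" by blast
    then have "orb N v = orb N w" by (rule orb_disj[OF sg vV wV])
    then have "w \<in> orb N v" using orb_self[OF sg wV] by simp
    then show False using noedge[OF sg nr nt vw] by simp
  qed
  have "V = orb N v \<union> orb N w" using cover orb_sub[OF sg vV] orb_sub[OF sg wV] by blast
  then show ?thesis using disj ed1 ed2 by blast
qed

end

context gs begin

lemma act_conj: assumes g: "g \<in> carrier G" and k: "k \<in> carrier G" and z: "z \<in> V"
  shows "act (g \<otimes> k \<otimes> inv g) z = act g (act k (act (inv g) z))"
  using act_mult[OF m_closed[OF g k] inv_closed[OF g] z] act_mult[OF g k act_in[OF inv_closed[OF g] z]] by simp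

lemma act_mult3: assumes a: "a \<in> carrier G" and b: "b \<in> carrier G" and z: "z \<in> V"
  shows "act (a \<otimes> b) z = act a (act b z)"
  by (rule act_mult[OF a b z])

context
  fixes N v0 w0 t
  assumes sg: "subgroup N G" and nr: "nrm N" and ab: "abl N"
    and e0: "E v0 w0" and VB: "V = orb N v0 \<union> orb N w0" and disj: "orb N v0 \<inter> orb N w0 = {}"
    and eb1: "\<And>a b. E a b \<Longrightarrow> a \<in> orb N v0 \<Longrightarrow> b \<in> orb N w0"
    and eb2: "\<And>a b. E a b \<Longrightarrow> a \<in> orb N w0 \<Longrightarrow> b \<in> orb N v0"
    and tc: "t \<in> carrier G" and tv: "act t v0 = w0" and tw: "act t w0 = v0"
begin

lemma v0V: "v0 \<in> V" using E_V1[OF e0] .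
lemma w0V: "w0 \<in> V" using E_V2[OF e0] .

lemma B1_orb: "x \<in> orb N v0 \<Longrightarrow> orb N x = orb N v0" by (rule orb_eq[OF sg v0V])
lemma B2_orb: "x \<in> orb N w0 \<Longrightarrow> orb N x = orb N w0" by (rule orb_eq[OF sg w0V])

lemma tB1: "x \<in> orb N v0 \<Longrightarrow> act t x \<in> orb N w0"
  using orb_act[OF sg nr tc v0V] tv by metis
lemma tB2: "x \<in> orb N w0 \<Longrightarrow> act t x \<in> orb N v0"
  using orb_act[OF sg nr tc w0V] tw by metis

lemma itB1: assumes x: "x \<in> orb N v0" shows "act (inv t) x \<in> orb N w0"
proof (rule ccontr)
  assume h: "act (inv t) x \<notin> orb N w0"
  have xV: "x \<in> V" using x VB by blast
  have "act (inv t) x \<in> V" by (rule act_in[OF inv_closed[OF tc] xV])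
  then have "act (inv t) x \<in> orb N v0" using h VB by blast
  then have "act t (act (inv t) x) \<in> orb N w0" by (rule tB1)
  then have "x \<in> orb N w0" using act_inv2[OF tc xV] by simp
  then show False using x disj by blast
qed

lemma itB2: assumes x: "x \<in> orb N w0" shows "act (inv t) x \<in> orb N v0"
proof (rule ccontr)
  assume h: "act (inv t) x \<notin> orb N v0"
  have xV: "x \<in> V" using x VB by blast
  have "act (inv t) x \<in> V" by (rule act_in[OF inv_closed[OF tc] xV])
  then have "act (inv t) x \<in> orb N w0" using h VB by blast
  then have "act t (act (inv t) x) \<in> orb N v0" by (rule tB2)
  then have "x \<in> orb N v0" using act_inv2[OF tc xV] by simp
  then show False using x disj by blast
qed

lemma nB: "n \<in> N \<Longrightarrow> x \<in> V \<Longrightarrow> act n x \<in> orb N x"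
  by (rule orb_mem[OF sg])

lemma fixorb: assumes n: "n \<in> N" and z: "z \<in> V" and fx: "act n z = z" and y: "y \<in> orb N z"
  shows "act n y = y"
proof -
  have yV: "y \<in> V" using orb_sub[OF sg z] y by blast
  have "act n y = act \<one> y"
    by (rule agree_orb[OF sg ab n subgroup.one_closed[OF sg] z _ y]) (use fx act_one[OF z] in simp)
  then show ?thesis using act_one[OF yV] by simp
qed

lemma two_block_clique:
  assumes DN: "D \<subseteq> N" and Dc: "card D = card (orb N v0)"
    and sep: "\<forall>c\<in>D. \<forall>d\<in>D. c \<noteq> d \<longrightarrow> (\<forall>x\<in>V. act c x \<noteq> act d x)"
  shows "\<exists>C. isclique G V act C"
proof -
  have Dcar: "D \<subseteq> carrier G" using DN N_car[OF sg] by blast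
  have side: "act d x \<noteq> act t (act d' x)" if d: "d \<in> D" and d': "d' \<in> D" and x: "x \<in> V" for d d' x
  proof (cases "x \<in> orb N v0")
    case True
    have h1: "act d x \<in> orb N v0" using nB[of d x] d DN x B1_orb[OF True] by auto
    have "act d' x \<in> orb N v0" using nB[of d' x] d' DN x B1_orb[OF True] by auto
    then have h2: "act t (act d' x) \<in> orb N w0" by (rule tB1)
    show ?thesis
    proof
      assume e: "act d x = act t (act d' x)"
      have "act d x \<in> orb N v0 \<inter> orb N w0" using h1 h2 e by simp
      then show False using disj by simp
    qed
  next
    case False
    then have x2: "x \<in> orb N w0" using x VB by blast
    have h1: "act d x \<in> orb N w0" using nB[of d x] d DN x B2_orb[OF x2] by auto
    have "act d' x \<in> orb N w0" using nB[of d' x] d' DN x B2_orb[OF x2] by auto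
    then have h2: "act t (act d' x) \<in> orb N v0" by (rule tB2)
    show ?thesis
    proof
      assume e: "act d x = act t (act d' x)"
      have "act d x \<in> orb N v0 \<inter> orb N w0" using h1 h2 e by simp
      then show False using disj by simp
    qed
  qed
  define C where "C = D \<union> (\<lambda>d. t \<otimes> d) ` D"
  have tdact: "act (t \<otimes> d) x = act t (act d x)" if "d \<in> D" "x \<in> V" for d x
    using act_mult[OF tc _ that(2)] that(1) Dcar by blast
  have tinj: "inj_on (\<lambda>d. t \<otimes> d) D"
  proof (rule inj_onI)
    fix a b assume a: "a \<in> D" and b: "b \<in> D" and e: "t \<otimes> a = t \<otimes> b"
    have "inv t \<otimes> (t \<otimes> a) = inv t \<otimes> (t \<otimes> b)" using e by simp
    moreover have "a \<in> carrier G" "b \<in> carrier G" using a b Dcar by auto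
    ultimately show "a = b" using inv_cancel_left_aux[OF tc] by metis
  qed
  have dis: "D \<inter> (\<lambda>d. t \<otimes> d) ` D = {}"
  proof (rule ccontr)
    assume "D \<inter> (\<lambda>d. t \<otimes> d) ` D \<noteq> {}"
    then obtain d d' where d: "d \<in> D" and d': "d' \<in> D" and e: "d = t \<otimes> d'" by blast
    have "act d v0 = act t (act d' v0)" using e tdact[OF d' v0V] by simp
    then show False using side[OF d d' v0V] by simp
  qed
  have finD: "finite D"
  proof (rule ccontr)
    assume "infinite D"
    then have "card D = 0" by simp
    then have "card (orb N v0) = 0" using Dc by simp
    moreover have "finite (orb N v0)" using orb_sub[OF sg v0V] fin finite_subset by blast
    ultimately show False using orb_self[OF sg v0V] by auto
  qed
  have "isclique G V act C" unfolding isclique_def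
  proof (intro conjI)
    show "C \<subseteq> carrier G" unfolding C_def using Dcar tc by auto
    have "card C = card D + card ((\<lambda>d. t \<otimes> d) ` D)" unfolding C_def
      by (rule card_Un_disjoint[OF finD _ dis]) (use finD in simp)
    also have "\<dots> = card D + card D" using card_image[OF tinj] by simp
    also have "\<dots> = card (orb N v0) + card (orb N w0)" using Dc orb_card_eq[OF sg nr v0V w0V] by simp
    also have "\<dots> = card V"
    proof -
      have f1: "finite (orb N v0)" using orb_sub[OF sg v0V] fin finite_subset by blast
      have f2: "finite (orb N w0)" using orb_sub[OF sg w0V] fin finite_subset by blast
      show ?thesis using card_Un_disjoint[OF f1 f2 disj] VB by simp
    qed
    finally show "card C = card V" .
    show "\<forall>c\<in>C. \<forall>d\<in>C. c \<noteq> d \<longrightarrow> (\<forall>v\<in>V. act c v \<noteq> act d v)"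
    proof (intro ballI impI)
      fix c d v assume c: "c \<in> C" and d: "d \<in> C" and cd: "c \<noteq> d" and v: "v \<in> V"
      show "act c v \<noteq> act d v"
      proof (cases "c \<in> D")
        case cD: True
        show ?thesis
        proof (cases "d \<in> D")
          case True then show ?thesis using sep cD cd v by blast
        next
          case False
          then obtain d' where d': "d' \<in> D" "d = t \<otimes> d'" using d C_def by blast
          show ?thesis using side[OF cD d'(1) v] tdact[OF d'(1) v] d'(2) by simp
        qed
      next
        case cD: False
        then obtain c' where c': "c' \<in> D" "c = t \<otimes> c'" using c C_def by blast
        show ?thesis
        proof (cases "d \<in> D")
          case True then show ?thesis using side[OF True c'(1) v] tdact[OF c'(1) v] c'(2) by metis
        next
          case False
          then obtain d' where d': "d' \<in> D" "d = t \<otimes> d'" using d C_def by blast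
          have "c' \<noteq> d'" using cd c'(2) d'(2) by blast
          then have "act c' v \<noteq> act d' v" using sep c'(1) d'(1) v by blast
          moreover have "act c' v \<in> V" "act d' v \<in> V" using act_in Dcar c'(1) d'(1) v by auto
          ultimately have "act t (act c' v) \<noteq> act t (act d' v)" using act_inj[OF tc] by blast
          then show ?thesis using tdact[OF c'(1) v] tdact[OF d'(1) v] c'(2) d'(2) by simp
        qed
      qed
    qed
  qed
  then show ?thesis by blast
qed

lemma case_c1:
  assumes K1triv: "\<forall>k\<in>N. (\<forall>x\<in>orb N v0. act k x = x) \<longrightarrow> (\<forall>x\<in>V. act k x = x)"
  shows "\<exists>C. isclique G V act C"
proof -
  have semi: "\<forall>n\<in>N. \<forall>v\<in>V. act n v = v \<longrightarrow> act n v0 = v0"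
  proof (intro ballI impI)
    fix n v assume n: "n \<in> N" and v: "v \<in> V" and fx: "act n v = v"
    have nc: "n \<in> carrier G" by (rule N_car[OF sg n])
    show "act n v0 = v0"
    proof (cases "v \<in> orb N v0")
      case True
      then show ?thesis using fixorb[OF n v fx] B1_orb[OF True] orb_self[OF sg v0V] by simp
    next
      case False
      then have v2: "v \<in> orb N w0" using v VB by blast
      have fx2: "act n y = y" if "y \<in> orb N w0" for y using fixorb[OF n v fx] B2_orb[OF v2] that by simp
      define n' where "n' = inv t \<otimes> n \<otimes> inv (inv t)"
      have n'N: "n' \<in> N" unfolding n'_def using nr n inv_closed[OF tc] unfolding nrm_def by blast
      have n'act: "act n' z = act (inv t) (act n (act t z))" if z: "z \<in> V" for z
        unfolding n'_def using act_conj[OF inv_closed[OF tc] nc z] inv_inv[OF tc] by simp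
      have "\<forall>x\<in>orb N v0. act n' x = x"
      proof
        fix x assume x: "x \<in> orb N v0"
        have xV: "x \<in> V" using x VB by blast
        show "act n' x = x" using n'act[OF xV] fx2[OF tB1[OF x]] act_inv1[OF tc xV] by simp
      qed
      then have triv: "\<forall>x\<in>V. act n' x = x" using K1triv n'N by blast
      have iv: "act (inv t) v0 \<in> V" by (rule act_in[OF inv_closed[OF tc] v0V])
      have "act n' (act (inv t) v0) = act (inv t) v0" using triv iv by blast
      then have "act (inv t) (act n v0) = act (inv t) v0"
        using n'act[OF iv] act_inv2[OF tc v0V] by simp
      then show ?thesis using act_inj[OF inv_closed[OF tc] act_in[OF nc v0V] v0V] by simp
    qed
  qed
  define D where "D = tau N v0 ` orb N v0"
  show ?thesis
  proof (rule two_block_clique)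
    show "D \<subseteq> N" unfolding D_def using tau[OF sg] by blast
    show "card D = card (orb N v0)" unfolding D_def by (rule card_image[OF tau_inj[OF sg]])
    show "\<forall>c\<in>D. \<forall>d\<in>D. c \<noteq> d \<longrightarrow> (\<forall>x\<in>V. act c x \<noteq> act d x)"
    proof (intro ballI impI)
      fix c d x assume c: "c \<in> D" and d: "d \<in> D" and cd: "c \<noteq> d" and x: "x \<in> V"
      obtain y where y: "y \<in> orb N v0" "c = tau N v0 y" using c D_def by blast
      obtain y' where y': "y' \<in> orb N v0" "d = tau N v0 y'" using d D_def by blast
      have "y \<noteq> y'" using cd y y' by blast
      then show "act c x \<noteq> act d x" using tau_sep[OF sg v0V semi y(1) y'(1) _ x] y(2) y'(2) by simp
    qed
  qed
qed


lemma ab_act: "a \<in> N \<Longrightarrow> b \<in> N \<Longrightarrow> z \<in> V \<Longrightarrow> act a (act b z) = act b (act a z)"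
  using ab unfolding abl_def by blast

lemma case_c2:
  assumes K1tr: "\<forall>y\<in>orb N w0. \<exists>k\<in>N. (\<forall>x\<in>orb N v0. act k x = x) \<and> act k w0 = y"
  shows "\<exists>C. isclique G V act C"
proof -
  define kap where "kap = (\<lambda>y. SOME k. k \<in> N \<and> (\<forall>x\<in>orb N v0. act k x = x) \<and> act k w0 = y)"
  have kap: "kap y \<in> N \<and> (\<forall>x\<in>orb N v0. act (kap y) x = x) \<and> act (kap y) w0 = y" if y: "y \<in> orb N w0" for y
  proof -
    have "\<exists>k. k \<in> N \<and> (\<forall>x\<in>orb N v0. act k x = x) \<and> act k w0 = y" using K1tr y by blast
    then show ?thesis unfolding kap_def by (rule someI_ex)
  qed
  have itc: "inv t \<in> carrier G" using tc by simp
  define sig where "sig = (\<lambda>x. inv t \<otimes> kap (act t x) \<otimes> inv (inv t))"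
  define d where "d = (\<lambda>x. kap (act t x) \<otimes> sig x)"
  have F: "kap (act t x) \<in> N \<and> sig x \<in> N \<and> d x \<in> N
     \<and> (\<forall>z\<in>orb N v0. act (kap (act t x)) z = z)
     \<and> (\<forall>z\<in>orb N w0. act (sig x) z = z)
     \<and> act (kap (act t x)) w0 = act t x
     \<and> act (sig x) v0 = x
     \<and> (\<forall>z\<in>V. act (d x) z = act (kap (act t x)) (act (sig x) z))
     \<and> act (d x) v0 = x" if x: "x \<in> orb N v0" for x
  proof -
    have xV: "x \<in> V" using x VB by blast
    have tx: "act t x \<in> orb N w0" by (rule tB1[OF x])
    have k: "kap (act t x) \<in> N" "\<forall>z\<in>orb N v0. act (kap (act t x)) z = z" "act (kap (act t x)) w0 = act t x"
      using kap[OF tx] by auto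
    have kc: "kap (act t x) \<in> carrier G" by (rule N_car[OF sg k(1)])
    have sN: "sig x \<in> N" unfolding sig_def using nr k(1) itc unfolding nrm_def by blast
    have sc: "sig x \<in> carrier G" by (rule N_car[OF sg sN])
    have sact: "act (sig x) z = act (inv t) (act (kap (act t x)) (act t z))" if z: "z \<in> V" for z
      unfolding sig_def using act_conj[OF itc kc z] inv_inv[OF tc] by simp
    have sfix: "\<forall>z\<in>orb N w0. act (sig x) z = z"
    proof
      fix z assume z: "z \<in> orb N w0"
      have zV: "z \<in> V" using z VB by blast
      show "act (sig x) z = z" using sact[OF zV] k(2) tB2[OF z] act_inv1[OF tc zV] by simp
    qed
    have sv0: "act (sig x) v0 = x" using sact[OF v0V] tv k(3) act_inv1[OF tc xV] by simp
    have dN: "d x \<in> N" unfolding d_def using subgroup.m_closed[OF sg k(1) sN] .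
    have dact: "\<forall>z\<in>V. act (d x) z = act (kap (act t x)) (act (sig x) z)"
      unfolding d_def using act_mult[OF kc sc] by blast
    have dv0: "act (d x) v0 = x" using dact v0V sv0 k(2) x by simp
    show ?thesis using k sN dN sfix sv0 dact dv0 by blast
  qed
  define D where "D = d ` orb N v0"
  have dinj: "inj_on d (orb N v0)"
  proof (rule inj_onI)
    fix x x' assume x: "x \<in> orb N v0" and x': "x' \<in> orb N v0" and e: "d x = d x'"
    have "x = act (d x) v0" using F[OF x] by simp
    also have "\<dots> = act (d x') v0" using e by simp
    also have "\<dots> = x'" using F[OF x'] by simp
    finally show "x = x'" .
  qed
  show ?thesis
  proof (rule two_block_clique)
    show "D \<subseteq> N" unfolding D_def using F by blast
    show "card D = card (orb N v0)" unfolding D_def by (rule card_image[OF dinj])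
    show "\<forall>c\<in>D. \<forall>c'\<in>D. c \<noteq> c' \<longrightarrow> (\<forall>z\<in>V. act c z \<noteq> act c' z)"
    proof (intro ballI impI)
      fix c c' z assume c: "c \<in> D" and c': "c' \<in> D" and cc: "c \<noteq> c'" and z: "z \<in> V"
      obtain x where x: "x \<in> orb N v0" "c = d x" using c D_def by blast
      obtain x' where x': "x' \<in> orb N v0" "c' = d x'" using c' D_def by blast
      have xx: "x \<noteq> x'" using cc x x' by blast
      have xV: "x \<in> V" and x'V: "x' \<in> V" using x(1) x'(1) VB by auto
      show "act c z \<noteq> act c' z"
      proof (cases "z \<in> orb N v0")
        case True
        have o: "orb N z = orb N v0" by (rule B1_orb[OF True])
        have s1: "act (sig x) z \<in> orb N v0" using nB[of "sig x" z] F[OF x(1)] z o by simp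
        have s2: "act (sig x') z \<in> orb N v0" using nB[of "sig x'" z] F[OF x'(1)] z o by simp
        have a1: "act c z = act (sig x) z" using F[OF x(1)] x(2) z s1 by simp
        have a2: "act c' z = act (sig x') z" using F[OF x'(1)] x'(2) z s2 by simp
        show ?thesis
        proof
          assume "act c z = act c' z"
          then have "act (sig x) z = act (sig x') z" using a1 a2 by simp
          then have "act (sig x) v0 = act (sig x') v0"
            using agree_orb[OF sg ab _ _ z] F[OF x(1)] F[OF x'(1)] o orb_self[OF sg v0V] by blast
          then show False using F[OF x(1)] F[OF x'(1)] xx by simp
        qed
      next
        case False
        then have z2: "z \<in> orb N w0" using z VB by blast
        have o: "orb N z = orb N w0" by (rule B2_orb[OF z2])
        have a1: "act c z = act (kap (act t x)) z" using F[OF x(1)] x(2) z z2 by simp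
        have a2: "act c' z = act (kap (act t x')) z" using F[OF x'(1)] x'(2) z z2 by simp
        show ?thesis
        proof
          assume "act c z = act c' z"
          then have "act (kap (act t x)) z = act (kap (act t x')) z" using a1 a2 by simp
          then have "act (kap (act t x)) w0 = act (kap (act t x')) w0"
            using agree_orb[OF sg ab _ _ z] F[OF x(1)] F[OF x'(1)] o orb_self[OF sg w0V] by blast
          then have "act t x = act t x'" using F[OF x(1)] F[OF x'(1)] by simp
          then show False using act_inj[OF tc xV x'V] xx by simp
        qed
      qed
    qed
  qed
qed


lemma gside:
  assumes g: "g \<in> carrier G"
  shows "(\<forall>x\<in>V. act g x \<in> orb N v0 \<longleftrightarrow> x \<in> orb N v0) \<or> (\<forall>x\<in>V. act g x \<in> orb N v0 \<longleftrightarrow> x \<in> orb N w0)"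
proof -
  have gv: "act g v0 \<in> V" by (rule act_in[OF g v0V])
  have gw: "act g w0 \<in> V" by (rule act_in[OF g w0V])
  have ge: "E (act g v0) (act g w0)" by (rule act_E[OF g e0])
  have img1: "act g x \<in> orb N (act g v0)" if "x \<in> orb N v0" for x by (rule orb_act[OF sg nr g v0V that])
  have img2: "act g x \<in> orb N (act g w0)" if "x \<in> orb N w0" for x by (rule orb_act[OF sg nr g w0V that])
  show ?thesis
  proof (cases "act g v0 \<in> orb N v0")
    case True
    have o1: "orb N (act g v0) = orb N v0" by (rule B1_orb[OF True])
    have "act g w0 \<in> orb N w0" by (rule eb1[OF ge True])
    then have o2: "orb N (act g w0) = orb N w0" by (rule B2_orb)
    have "\<forall>x\<in>V. act g x \<in> orb N v0 \<longleftrightarrow> x \<in> orb N v0"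
    proof
      fix x assume x: "x \<in> V"
      show "act g x \<in> orb N v0 \<longleftrightarrow> x \<in> orb N v0"
      proof
        assume h: "act g x \<in> orb N v0"
        show "x \<in> orb N v0"
        proof (rule ccontr)
          assume "x \<notin> orb N v0"
          then have "x \<in> orb N w0" using x VB by blast
          then have "act g x \<in> orb N w0" using img2 o2 by simp
          then show False using h disj by blast
        qed
      next
        assume "x \<in> orb N v0" then show "act g x \<in> orb N v0" using img1 o1 by simp
      qed
    qed
    then show ?thesis by blast
  next
    case False
    then have F2: "act g v0 \<in> orb N w0" using gv VB by blast
    have o1: "orb N (act g v0) = orb N w0" by (rule B2_orb[OF F2])
    have "act g w0 \<in> orb N v0" by (rule eb2[OF ge F2])
    then have o2: "orb N (act g w0) = orb N v0" by (rule B1_orb)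
    have "\<forall>x\<in>V. act g x \<in> orb N v0 \<longleftrightarrow> x \<in> orb N w0"
    proof
      fix x assume x: "x \<in> V"
      show "act g x \<in> orb N v0 \<longleftrightarrow> x \<in> orb N w0"
      proof
        assume h: "act g x \<in> orb N v0"
        show "x \<in> orb N w0"
        proof (rule ccontr)
          assume "x \<notin> orb N w0"
          then have "x \<in> orb N v0" using x VB by blast
          then have "act g x \<in> orb N w0" using img1 o1 by simp
          then show False using h disj by blast
        qed
      next
        assume "x \<in> orb N w0" then show "act g x \<in> orb N v0" using img2 o2 by simp
      qed
    qed
    then show ?thesis by blast
  qed
qed

lemma conj_fix:
  assumes g: "g \<in> carrier G" and k: "k \<in> N" and fx: "\<forall>x\<in>X. act k x = x"
    and Y: "\<forall>y\<in>Y. act (inv g) y \<in> X" and YV: "Y \<subseteq> V"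
  shows "g \<otimes> k \<otimes> inv g \<in> N \<and> (\<forall>y\<in>Y. act (g \<otimes> k \<otimes> inv g) y = y)"
proof
  show "g \<otimes> k \<otimes> inv g \<in> N" using nr g k unfolding nrm_def by blast
  show "\<forall>y\<in>Y. act (g \<otimes> k \<otimes> inv g) y = y"
  proof
    fix y assume y: "y \<in> Y"
    have yV: "y \<in> V" using y YV by blast
    have "act (g \<otimes> k \<otimes> inv g) y = act g (act k (act (inv g) y))" by (rule act_conj[OF g N_car[OF sg k] yV])
    also have "\<dots> = act g (act (inv g) y)" using fx Y y by simp
    also have "\<dots> = y" by (rule act_inv2[OF g yV])
    finally show "act (g \<otimes> k \<otimes> inv g) y = y" .
  qed
qed

lemma case_M:
  assumes IH: "\<And>(V'::'v set) E' act'. card V' < card V \<Longrightarrow> gs G p V' E' act' \<Longrightarrow> \<exists>C. isclique G V' act' C"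
    and K1nt: "\<exists>k\<in>N. (\<forall>x\<in>orb N v0. act k x = x) \<and> (\<exists>x\<in>V. act k x \<noteq> x)"
    and K1ntr: "\<exists>y\<in>orb N w0. \<forall>k\<in>N. (\<forall>x\<in>orb N v0. act k x = x) \<longrightarrow> act k w0 \<noteq> y"
  shows "\<exists>C. isclique G V act C"
proof -
  define K1 where "K1 = {k\<in>N. \<forall>x\<in>orb N v0. act k x = x}"
  define K2 where "K2 = {k\<in>N. \<forall>x\<in>orb N w0. act k x = x}"
  define M where "M = {n\<in>N. \<exists>k1\<in>K1. \<exists>k2\<in>K2. \<forall>x\<in>V. act n x = act (k1 \<otimes> k2) x}"
  have B1V: "orb N v0 \<subseteq> V" and B2V: "orb N w0 \<subseteq> V" using VB by auto
  have Kmul: "k \<otimes> k' \<in> N \<and> (\<forall>x\<in>X. act (k \<otimes> k') x = x)"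
    if k: "k \<in> N" and k': "k' \<in> N" and f: "\<forall>x\<in>X. act k x = x" and f': "\<forall>x\<in>X. act k' x = x" and X: "X \<subseteq> V" for k k' X
    using subgroup.m_closed[OF sg k k'] act_mult[OF N_car[OF sg k] N_car[OF sg k']] f f' X by auto
  have Kinv: "inv k \<in> N \<and> (\<forall>x\<in>X. act (inv k) x = x)"
    if k: "k \<in> N" and f: "\<forall>x\<in>X. act k x = x" and X: "X \<subseteq> V" for k X
  proof
    show "inv k \<in> N" using subgroup.m_inv_closed[OF sg k] .
    show "\<forall>x\<in>X. act (inv k) x = x"
    proof
      fix x assume x: "x \<in> X"
      have "act (inv k) (act k x) = x" using act_inv1[OF N_car[OF sg k]] x X by blast
      then show "act (inv k) x = x" using f x by simp
    qed
  qed
  have one1: "\<one> \<in> K1" unfolding K1_def using subgroup.one_closed[OF sg] act_one B1V by auto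
  have one2: "\<one> \<in> K2" unfolding K2_def using subgroup.one_closed[OF sg] act_one B2V by auto
  have K1N: "K1 \<subseteq> N" and K2N: "K2 \<subseteq> N" unfolding K1_def K2_def by auto
  have MN: "M \<subseteq> N" unfolding M_def by auto
  have sgM: "subgroup M G"
  proof (rule subgroup.intro)
    show "M \<subseteq> carrier G" using MN N_car[OF sg] by blast
    show "\<one> \<in> M" unfolding M_def using subgroup.one_closed[OF sg] one1 one2 by force
    show "\<And>x y. x \<in> M \<Longrightarrow> y \<in> M \<Longrightarrow> x \<otimes> y \<in> M"
    proof -
      fix n n' assume n: "n \<in> M" and n': "n' \<in> M"
      obtain k1 k2 where k1: "k1 \<in> K1" and k2: "k2 \<in> K2" and nk: "\<forall>x\<in>V. act n x = act (k1 \<otimes> k2) x"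
        and nN: "n \<in> N" using n M_def by blast
      obtain k1' k2' where k1': "k1' \<in> K1" and k2': "k2' \<in> K2" and nk': "\<forall>x\<in>V. act n' x = act (k1' \<otimes> k2') x"
        and nN': "n' \<in> N" using n' M_def by blast
      have k1N: "k1 \<in> N" "k1' \<in> N" and k2N: "k2 \<in> N" "k2' \<in> N" using k1 k1' k2 k2' K1N K2N by auto
      have c: "k1 \<in> carrier G" "k1' \<in> carrier G" "k2 \<in> carrier G" "k2' \<in> carrier G"
        "n \<in> carrier G" "n' \<in> carrier G" using k1N k2N nN nN' N_car[OF sg] by auto
      have K1m: "k1 \<otimes> k1' \<in> K1" unfolding K1_def using Kmul[OF k1N(1) k1N(2) _ _ B1V] k1 k1' K1_def by blast
      have K2m: "k2 \<otimes> k2' \<in> K2" unfolding K2_def using Kmul[OF k2N(1) k2N(2) _ _ B2V] k2 k2' K2_def by blast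
      have "\<forall>x\<in>V. act (n \<otimes> n') x = act ((k1 \<otimes> k1') \<otimes> (k2 \<otimes> k2')) x"
      proof
        fix x assume x: "x \<in> V"
        have n'x: "act n' x \<in> V" by (rule act_in[OF c(6) x])
        have k2'x: "act k2' x \<in> V" by (rule act_in[OF c(4) x])
        have "act (n \<otimes> n') x = act n (act n' x)" by (rule act_mult[OF c(5) c(6) x])
        also have "\<dots> = act (k1 \<otimes> k2) (act (k1' \<otimes> k2') x)" using nk n'x nk' x by simp
        also have "\<dots> = act k1 (act k2 (act k1' (act k2' x)))"
          using act_mult[OF c(1) c(3)] act_mult[OF c(2) c(4) x] act_in[OF m_closed[OF c(2) c(4)] x] by simp
        also have "\<dots> = act k1 (act k1' (act k2 (act k2' x)))" using ab_act[OF k2N(1) k1N(2) k2'x] by simp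
        also have "\<dots> = act ((k1 \<otimes> k1') \<otimes> (k2 \<otimes> k2')) x"
          using act_mult[OF m_closed[OF c(1) c(2)] m_closed[OF c(3) c(4)] x] act_mult[OF c(1) c(2)]
            act_mult[OF c(3) c(4) x] act_in[OF m_closed[OF c(3) c(4)] x] by simp
        finally show "act (n \<otimes> n') x = act ((k1 \<otimes> k1') \<otimes> (k2 \<otimes> k2')) x" .
      qed
      moreover have "n \<otimes> n' \<in> N" using subgroup.m_closed[OF sg nN nN'] .
      ultimately show "n \<otimes> n' \<in> M" unfolding M_def using K1m K2m by blast
    qed
    show "\<And>x. x \<in> M \<Longrightarrow> inv x \<in> M"
    proof -
      fix n assume n: "n \<in> M"
      obtain k1 k2 where k1: "k1 \<in> K1" and k2: "k2 \<in> K2" and nk: "\<forall>x\<in>V. act n x = act (k1 \<otimes> k2) x"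
        and nN: "n \<in> N" using n M_def by blast
      have k1N: "k1 \<in> N" and k2N: "k2 \<in> N" using k1 k2 K1N K2N by auto
      have c: "k1 \<in> carrier G" "k2 \<in> carrier G" "n \<in> carrier G" using k1N k2N nN N_car[OF sg] by auto
      have K1i: "inv k1 \<in> K1" unfolding K1_def using Kinv[OF k1N _ B1V] k1 K1_def by blast
      have K2i: "inv k2 \<in> K2" unfolding K2_def using Kinv[OF k2N _ B2V] k2 K2_def by blast
      have ik1N: "inv k1 \<in> N" and ik2N: "inv k2 \<in> N" using K1i K2i K1N K2N by auto
      have "\<forall>x\<in>V. act (inv n) x = act (inv k1 \<otimes> inv k2) x"
      proof
        fix x assume x: "x \<in> V"
        have "act (inv n) x = act (inv (k1 \<otimes> k2)) x" by (rule act_cong_inv[OF c(3) m_closed[OF c(1) c(2)] nk x])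
        also have "\<dots> = act (inv k2 \<otimes> inv k1) x" using inv_mult_group[OF c(1) c(2)] by simp
        also have "\<dots> = act (inv k2) (act (inv k1) x)" using act_mult[OF inv_closed[OF c(2)] inv_closed[OF c(1)] x] .
        also have "\<dots> = act (inv k1) (act (inv k2) x)" by (rule ab_act[OF ik2N ik1N x])
        also have "\<dots> = act (inv k1 \<otimes> inv k2) x" using act_mult[OF inv_closed[OF c(1)] inv_closed[OF c(2)] x] by simp
        finally show "act (inv n) x = act (inv k1 \<otimes> inv k2) x" .
      qed
      moreover have "inv n \<in> N" using subgroup.m_inv_closed[OF sg nN] .
      ultimately show "inv n \<in> M" unfolding M_def using K1i K2i by blast
    qed
  qed
  have nrM: "nrm M" unfolding nrm_def
  proof (intro ballI)
    fix g n assume g: "g \<in> carrier G" and n: "n \<in> M"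
    obtain k1 k2 where k1: "k1 \<in> K1" and k2: "k2 \<in> K2" and nk: "\<forall>x\<in>V. act n x = act (k1 \<otimes> k2) x"
      and nN: "n \<in> N" using n M_def by blast
    have k1N: "k1 \<in> N" and k2N: "k2 \<in> N" using k1 k2 K1N K2N by auto
    have c: "k1 \<in> carrier G" "k2 \<in> carrier G" "n \<in> carrier G" using k1N k2N nN N_car[OF sg] by auto
    have f1: "\<forall>x\<in>orb N v0. act k1 x = x" using k1 K1_def by blast
    have f2: "\<forall>x\<in>orb N w0. act k2 x = x" using k2 K2_def by blast
    have cN: "g \<otimes> n \<otimes> inv g \<in> N" using nr g nN unfolding nrm_def by blast
    have ig: "inv g \<in> carrier G" using g by simp
    have cact: "act (g \<otimes> n \<otimes> inv g) x = act (g \<otimes> k1 \<otimes> inv g) (act (g \<otimes> k2 \<otimes> inv g) x)" if x: "x \<in> V" for x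
    proof -
      have igx: "act (inv g) x \<in> V" by (rule act_in[OF ig x])
      have "act (g \<otimes> n \<otimes> inv g) x = act g (act n (act (inv g) x))" by (rule act_conj[OF g c(3) x])
      also have "\<dots> = act g (act (k1 \<otimes> k2) (act (inv g) x))" using nk igx by simp
      also have "\<dots> = act (g \<otimes> (k1 \<otimes> k2) \<otimes> inv g) x" using act_conj[OF g m_closed[OF c(1) c(2)] x] by simp
      also have "\<dots> = act ((g \<otimes> k1 \<otimes> inv g) \<otimes> (g \<otimes> k2 \<otimes> inv g)) x" using conj_mult[OF g c(1) c(2)] by simp
      also have "\<dots> = act (g \<otimes> k1 \<otimes> inv g) (act (g \<otimes> k2 \<otimes> inv g) x)"
        by (rule act_mult[OF _ _ x]) (use g c in auto)
      finally show ?thesis .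
    qed
    have igV: "act (inv g) y \<in> V" if "y \<in> V" for y by (rule act_in[OF ig that])
    have bk: "act g (act (inv g) y) = y" if "y \<in> V" for y by (rule act_inv2[OF g that])
    show "g \<otimes> n \<otimes> inv g \<in> M"
    proof (cases "\<forall>x\<in>V. act g x \<in> orb N v0 \<longleftrightarrow> x \<in> orb N v0")
      case True
      have Y1: "\<forall>y\<in>orb N v0. act (inv g) y \<in> orb N v0" using True igV bk B1V by (metis subsetD)
      have Y2: "\<forall>y\<in>orb N w0. act (inv g) y \<in> orb N w0"
      proof
        fix y assume y: "y \<in> orb N w0"
        have yV: "y \<in> V" using y B2V by blast
        have "y \<notin> orb N v0" using y disj by blast
        then have "act (inv g) y \<notin> orb N v0" using True igV[OF yV] bk[OF yV] by metis
        then show "act (inv g) y \<in> orb N w0" using igV[OF yV] VB by blast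
      qed
      have a: "g \<otimes> k1 \<otimes> inv g \<in> K1" unfolding K1_def using conj_fix[OF g k1N f1 Y1 B1V] by blast
      have b: "g \<otimes> k2 \<otimes> inv g \<in> K2" unfolding K2_def using conj_fix[OF g k2N f2 Y2 B2V] by blast
      have "\<forall>x\<in>V. act (g \<otimes> n \<otimes> inv g) x = act ((g \<otimes> k1 \<otimes> inv g) \<otimes> (g \<otimes> k2 \<otimes> inv g)) x"
      proof
        fix x assume x: "x \<in> V"
        show "act (g \<otimes> n \<otimes> inv g) x = act ((g \<otimes> k1 \<otimes> inv g) \<otimes> (g \<otimes> k2 \<otimes> inv g)) x"
          using cact[OF x] act_mult[OF _ _ x, of "g \<otimes> k1 \<otimes> inv g" "g \<otimes> k2 \<otimes> inv g"] g c by simp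
      qed
      then show ?thesis unfolding M_def using cN a b by blast
    next
      case False
      then have S: "\<forall>x\<in>V. act g x \<in> orb N v0 \<longleftrightarrow> x \<in> orb N w0" using gside[OF g] by blast
      have Y1: "\<forall>y\<in>orb N v0. act (inv g) y \<in> orb N w0" using S igV bk B1V by (metis subsetD)
      have Y2: "\<forall>y\<in>orb N w0. act (inv g) y \<in> orb N v0"
      proof
        fix y assume y: "y \<in> orb N w0"
        have yV: "y \<in> V" using y B2V by blast
        have "y \<notin> orb N v0" using y disj by blast
        then have "act (inv g) y \<notin> orb N w0" using S igV[OF yV] bk[OF yV] by metis
        then show "act (inv g) y \<in> orb N v0" using igV[OF yV] VB by blast
      qed
      have a: "g \<otimes> k1 \<otimes> inv g \<in> K2" unfolding K2_def using conj_fix[OF g k1N f1 Y2 B2V] by blast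
      have b: "g \<otimes> k2 \<otimes> inv g \<in> K1" unfolding K1_def using conj_fix[OF g k2N f2 Y1 B1V] by blast
      have aN: "g \<otimes> k1 \<otimes> inv g \<in> N" and bN: "g \<otimes> k2 \<otimes> inv g \<in> N" using a b K1N K2N by auto
      have "\<forall>x\<in>V. act (g \<otimes> n \<otimes> inv g) x = act ((g \<otimes> k2 \<otimes> inv g) \<otimes> (g \<otimes> k1 \<otimes> inv g)) x"
      proof
        fix x assume x: "x \<in> V"
        have "act (g \<otimes> n \<otimes> inv g) x = act (g \<otimes> k1 \<otimes> inv g) (act (g \<otimes> k2 \<otimes> inv g) x)" by (rule cact[OF x])
        also have "\<dots> = act (g \<otimes> k2 \<otimes> inv g) (act (g \<otimes> k1 \<otimes> inv g) x)" by (rule ab_act[OF aN bN x])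
        also have "\<dots> = act ((g \<otimes> k2 \<otimes> inv g) \<otimes> (g \<otimes> k1 \<otimes> inv g)) x"
          using act_mult[OF _ _ x, of "g \<otimes> k2 \<otimes> inv g" "g \<otimes> k1 \<otimes> inv g"] g c by simp
        finally show "act (g \<otimes> n \<otimes> inv g) x = act ((g \<otimes> k2 \<otimes> inv g) \<otimes> (g \<otimes> k1 \<otimes> inv g)) x" .
      qed
      then show ?thesis unfolding M_def using cN a b by blast
    qed
  qed
  have ntrM: "\<exists>n\<in>M. \<exists>x\<in>V. act n x \<noteq> x"
  proof -
    obtain k x where k: "k \<in> N" "\<forall>x\<in>orb N v0. act k x = x" and x: "x \<in> V" "act k x \<noteq> x" using K1nt by blast
    have kc: "k \<in> carrier G" by (rule N_car[OF sg k(1)])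
    have "k \<in> K1" unfolding K1_def using k by blast
    moreover have "\<forall>z\<in>V. act k z = act (k \<otimes> \<one>) z" using kc by simp
    ultimately have "k \<in> M" unfolding M_def using one2 k(1) by blast
    then show ?thesis using x by blast
  qed
  obtain y where y: "y \<in> orb N w0" and ky: "\<forall>k\<in>N. (\<forall>x\<in>orb N v0. act k x = x) \<longrightarrow> act k w0 \<noteq> y"
    using K1ntr by blast
  have yV: "y \<in> V" using y B2V by blast
  have ynot: "y \<notin> orb M w0"
  proof
    assume "y \<in> orb M w0"
    then obtain n where n: "n \<in> M" "y = act n w0" unfolding orb_def by blast
    obtain k1 k2 where k1: "k1 \<in> K1" and k2: "k2 \<in> K2" and nk: "\<forall>x\<in>V. act n x = act (k1 \<otimes> k2) x"
      using n(1) M_def by blast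
    have c: "k1 \<in> carrier G" "k2 \<in> carrier G" using k1 k2 K1N K2N N_car[OF sg] by auto
    have "act n w0 = act k1 (act k2 w0)" using nk w0V act_mult[OF c w0V] by simp
    also have "\<dots> = act k1 w0" using k2 K2_def orb_self[OF sg w0V] by simp
    finally have "act k1 w0 = y" using n(2) by simp
    then show False using ky k1 K1_def by blast
  qed
  have ntM: "\<not> (\<forall>x\<in>V. orb M x = V)" using ynot yV w0V by blast
  have orbMN: "orb M x \<subseteq> orb N x" for x unfolding orb_def using MN by blast
  have s1M: "\<forall>v w w'. E v w \<longrightarrow> E v w' \<longrightarrow> w' \<in> orb M w \<longrightarrow> w = w'"
  proof (rule ccontr)
    assume "\<not> (\<forall>v w w'. E v w \<longrightarrow> E v w' \<longrightarrow> w' \<in> orb M w \<longrightarrow> w = w')"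
    then obtain v w w' where vw: "E v w" and vw': "E v w'" and w'o: "w' \<in> orb M w" and ww: "w \<noteq> w'" by blast
    have TO: "V = orb M v \<union> orb M w \<and> orb M v \<inter> orb M w = {}"
      using two_orbits[OF sgM nrM ntM vw vw' ww w'o] by blast
    have vV: "v \<in> V" using E_V1[OF vw] .
    have wV: "w \<in> V" using E_V2[OF vw] .
    have inB2: "a \<in> orb N w0" if a: "a \<in> V" and b: "b \<in> V" and ab: "orb M a = orb M b" and bo: "b \<in> orb M w0 \<or> b \<in> orb M y" for a b
    proof -
      have "a \<in> orb M b" using ab orb_self[OF sgM a] by simp
      then have "a \<in> orb N b" using orbMN by blast
      moreover have "b \<in> orb N w0"
        using bo orbMN orb_sym[OF sgM w0V] orb_sym[OF sgM yV] B2_orb[OF y] orb_self[OF sg w0V]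
        by (metis (no_types, lifting) B2_orb in_mono orb_sym sg w0V yV y)
      ultimately show ?thesis using orb_trans[OF sg w0V] by blast
    qed
    have w0c: "w0 \<in> orb M v \<or> w0 \<in> orb M w" using TO w0V by blast
    have yc: "y \<in> orb M v \<or> y \<in> orb M w" using TO yV by blast
    have "v \<in> orb N w0 \<and> w \<in> orb N w0"
    proof (cases "w0 \<in> orb M v")
      case True
      have "y \<notin> orb M v"
      proof
        assume "y \<in> orb M v"
        then have "orb M y = orb M v" by (rule orb_eq[OF sgM vV])
        moreover have "orb M w0 = orb M v" using orb_eq[OF sgM vV True] .
        ultimately show False using ynot orb_self[OF sgM yV] by simp
      qed
      then have yw: "y \<in> orb M w" using yc by blast
      have "v \<in> orb N w0" by (rule inB2[OF vV w0V orb_eq[OF sgM vV True, symmetric] disjI1[OF orb_self[OF sgM w0V]]])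
      moreover have "w \<in> orb N w0" by (rule inB2[OF wV yV orb_eq[OF sgM wV yw, symmetric] disjI2[OF orb_self[OF sgM yV]]])
      ultimately show ?thesis by blast
    next
      case False
      then have w0w: "w0 \<in> orb M w" using w0c by blast
      have "y \<notin> orb M w"
      proof
        assume "y \<in> orb M w"
        then have "orb M y = orb M w" by (rule orb_eq[OF sgM wV])
        moreover have "orb M w0 = orb M w" using orb_eq[OF sgM wV w0w] .
        ultimately show False using ynot orb_self[OF sgM yV] by simp
      qed
      then have yv: "y \<in> orb M v" using yc by blast
      have "w \<in> orb N w0" by (rule inB2[OF wV w0V orb_eq[OF sgM wV w0w, symmetric] disjI1[OF orb_self[OF sgM w0V]]])
      moreover have "v \<in> orb N w0" by (rule inB2[OF vV yV orb_eq[OF sgM vV yv, symmetric] disjI2[OF orb_self[OF sgM yV]]])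
      ultimately show ?thesis by blast
    qed
    then have "w \<in> orb N v0" "w \<in> orb N w0" using eb2[OF vw] by auto
    then show False using disj by blast
  qed
  show ?thesis by (rule case_b[OF IH sgM nrM ntrM ntM s1M])
qed

end
end

context gs begin

lemma main_step:
  assumes IH: "\<And>(V'::'v set) E' act'. card V' < card V \<Longrightarrow> gs G p V' E' act' \<Longrightarrow> \<exists>C. isclique G V' act' C"
    and sg: "subgroup N G" and nr: "nrm N" and ab: "abl N" and ntr: "\<exists>n\<in>N. \<exists>x\<in>V. act n x \<noteq> x"
  shows "\<exists>C. isclique G V act C"
proof (cases "\<forall>x\<in>V. orb N x = V")
  case True
  show ?thesis using case_a[OF sg ab True] .
next
  case nt: False
  show ?thesis
  proof (cases "\<forall>v w w'. E v w \<longrightarrow> E v w' \<longrightarrow> w' \<in> orb N w \<longrightarrow> w = w'")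
    case True
    show ?thesis using case_b[OF IH sg nr ntr nt True] .
  next
    case False
    then obtain v w w' where vw: "E v w" and vw': "E v w'" and w'o: "w' \<in> orb N w" and ww: "w \<noteq> w'" by blast
    have TO: "V = orb N v \<union> orb N w \<and> orb N v \<inter> orb N w = {}
      \<and> (\<forall>a b. E a b \<longrightarrow> a \<in> orb N v \<longrightarrow> b \<in> orb N w) \<and> (\<forall>a b. E a b \<longrightarrow> a \<in> orb N w \<longrightarrow> b \<in> orb N v)"
      by (rule two_orbits[OF sg nr nt vw vw' ww w'o])
    have VB: "V = orb N v \<union> orb N w" using TO by blast
    have disj: "orb N v \<inter> orb N w = {}" using TO by blast
    have eb1: "\<And>a b. E a b \<Longrightarrow> a \<in> orb N v \<Longrightarrow> b \<in> orb N w" using TO by blast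
    have eb2: "\<And>a b. E a b \<Longrightarrow> a \<in> orb N w \<Longrightarrow> b \<in> orb N v" using TO by blast
    obtain t where t: "t \<in> carrier G" "act t v = w" "act t w = v" using arc[OF vw Esym[OF vw]] by blast
    note ctx = sg nr ab vw VB disj eb1 eb2 t
    show ?thesis
    proof (cases "\<forall>k\<in>N. (\<forall>x\<in>orb N v. act k x = x) \<longrightarrow> (\<forall>x\<in>V. act k x = x)")
      case True
      show ?thesis using case_c1[OF ctx True] .
    next
      case K1nt: False
      show ?thesis
      proof (cases "\<forall>y\<in>orb N w. \<exists>k\<in>N. (\<forall>x\<in>orb N v. act k x = x) \<and> act k w = y")
        case True
        show ?thesis using case_c2[OF ctx True] .
      next
        case False
        then have K1ntr: "\<exists>y\<in>orb N w. \<forall>k\<in>N. (\<forall>x\<in>orb N v. act k x = x) \<longrightarrow> act k w \<noteq> y" by blast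
        have K1nt': "\<exists>k\<in>N. (\<forall>x\<in>orb N v. act k x = x) \<and> (\<exists>x\<in>V. act k x \<noteq> x)" using K1nt by blast
        show ?thesis by (rule case_M[OF ctx IH K1nt' K1ntr])
      qed
    qed
  qed
qed

end

theorem core:
  fixes G (structure) and V :: "'v set"
  assumes grp: "group G" and solv: "solvable G" and gsa: "gs G p V E act"
  shows "\<exists>C. isclique G V act C"
  using gsa
proof (induction "card V" arbitrary: V E act rule: less_induct)
  case less
  interpret gs G p V E act by (rule less.prems)
  define S where "S = {g \<in> carrier G. \<forall>v\<in>V. act g v = v}"
  have S1: "\<one> \<in> S" unfolding S_def using act_one by simp
  have nS: "\<not> carrier G \<subseteq> S" unfolding S_def using nontriv by blast
  obtain N where sg: "subgroup N G" and nrN: "\<forall>g\<in>carrier G. \<forall>n\<in>N. g \<otimes> n \<otimes> inv g \<in> N"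
    and nNS: "\<not> N \<subseteq> S" and comm: "\<forall>a\<in>N. \<forall>b\<in>N. a \<otimes> b \<otimes> inv a \<otimes> inv b \<in> S"
    using solvable_abelian_normal[OF solv S1 nS] by blast
  have nr: "nrm N" unfolding nrm_def using nrN .
  have ab: "abl N" unfolding abl_def
  proof (intro ballI)
    fix a b v assume a: "a \<in> N" and b: "b \<in> N" and v: "v \<in> V"
    have ac: "a \<in> carrier G" and bc: "b \<in> carrier G" using a b N_car[OF sg] by auto
    define w where "w = act b (act a v)"
    have av: "act a v \<in> V" by (rule act_in[OF ac v])
    have wV: "w \<in> V" unfolding w_def by (rule act_in[OF bc av])
    have c: "a \<otimes> b \<otimes> inv a \<otimes> inv b \<in> S" using comm a b by blast
    have "act (a \<otimes> b \<otimes> inv a \<otimes> inv b) w = w" using c wV unfolding S_def by blast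
    moreover have "act (a \<otimes> b \<otimes> inv a \<otimes> inv b) w = act a (act b (act (inv a) (act (inv b) w)))"
      using act_mult ac bc wV act_in by simp
    moreover have "act (inv b) w = act a v" unfolding w_def by (rule act_inv1[OF bc av])
    moreover have "act (inv a) (act a v) = v" by (rule act_inv1[OF ac v])
    ultimately show "act a (act b v) = act b (act a v)" unfolding w_def by simp
  qed
  have ntr: "\<exists>n\<in>N. \<exists>x\<in>V. act n x \<noteq> x" using nNS N_car[OF sg] unfolding S_def by blast
  show ?case
  proof (rule main_step[OF _ sg nr ab ntr])
    fix V' :: "'v set" and E' act'
    assume "card V' < card V" and "gs G p V' E' act'"
    then show "\<exists>C. isclique G V' act' C" using less.hyps by blast
  qed
qed

lemma (in group) inv_cancel_right_aux:
  assumes "g \<in> carrier G" "z \<in> carrier G"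
  shows "g \<otimes> (inv g \<otimes> z) = z"
  using assms by (simp add: m_assoc[symmetric])

lemma perm_monoid_simps [simp]:
  "carrier (perm_monoid A) = A" "monoid.mult (perm_monoid A) = (\<circ>)" "one (perm_monoid A) = id"
  unfolding perm_monoid_def by simp_all

lemma aut_group:
  fixes V :: "'a set" and E
  shows "group (perm_monoid {f. graph_aut V E f})"
proof (rule groupI)
  show "\<And>x y. x \<in> carrier (perm_monoid {f. graph_aut V E f}) \<Longrightarrow> y \<in> carrier (perm_monoid {f. graph_aut V E f})
     \<Longrightarrow> x \<otimes>\<^bsub>perm_monoid {f. graph_aut V E f}\<^esub> y \<in> carrier (perm_monoid {f. graph_aut V E f})"
    by (auto simp: graph_aut_def permutes_compose)
  show "\<one>\<^bsub>perm_monoid {f. graph_aut V E f}\<^esub> \<in> carrier (perm_monoid {f. graph_aut V E f})"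
    by (simp add: graph_aut_def)
  show "\<And>x y z. x \<in> carrier (perm_monoid {f. graph_aut V E f}) \<Longrightarrow> y \<in> carrier (perm_monoid {f. graph_aut V E f}) \<Longrightarrow>
      z \<in> carrier (perm_monoid {f. graph_aut V E f}) \<Longrightarrow>
      x \<otimes>\<^bsub>perm_monoid {f. graph_aut V E f}\<^esub> y \<otimes>\<^bsub>perm_monoid {f. graph_aut V E f}\<^esub> z =
      x \<otimes>\<^bsub>perm_monoid {f. graph_aut V E f}\<^esub> (y \<otimes>\<^bsub>perm_monoid {f. graph_aut V E f}\<^esub> z)"
    by (simp add: o_assoc)
  show "\<And>x. x \<in> carrier (perm_monoid {f. graph_aut V E f}) \<Longrightarrow> \<one>\<^bsub>perm_monoid {f. graph_aut V E f}\<^esub> \<otimes>\<^bsub>perm_monoid {f. graph_aut V E f}\<^esub> x = x"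
    by simp
  show "\<And>x. x \<in> carrier (perm_monoid {f. graph_aut V E f}) \<Longrightarrow>
      \<exists>y\<in>carrier (perm_monoid {f. graph_aut V E f}). y \<otimes>\<^bsub>perm_monoid {f. graph_aut V E f}\<^esub> x = \<one>\<^bsub>perm_monoid {f. graph_aut V E f}\<^esub>"
  proof -
    fix f assume "f \<in> carrier (perm_monoid {f. graph_aut V E f})"
    then have f: "f permutes V" "\<forall>u v. E u v \<longleftrightarrow> E (f u) (f v)" by (auto simp: graph_aut_def)
    have "inv_into UNIV f permutes V" by (rule permutes_inv[OF f(1)])
    moreover have "\<forall>u v. E u v \<longleftrightarrow> E (inv_into UNIV f u) (inv_into UNIV f v)"
    proof (intro allI)
      fix u v
      have "E (inv_into UNIV f u) (inv_into UNIV f v) \<longleftrightarrow> E (f (inv_into UNIV f u)) (f (inv_into UNIV f v))" using f(2) by blast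
      then show "E u v \<longleftrightarrow> E (inv_into UNIV f u) (inv_into UNIV f v)" using permutes_inverses(1)[OF f(1)] by simp
    qed
    ultimately have "inv_into UNIV f \<in> carrier (perm_monoid {f. graph_aut V E f})" by (simp add: graph_aut_def)
    moreover have "inv_into UNIV f \<circ> f = id" by (rule permutes_inv_o(2)[OF f(1)])
    ultimately show "\<exists>y\<in>carrier (perm_monoid {f. graph_aut V E f}). y \<otimes>\<^bsub>perm_monoid {f. graph_aut V E f}\<^esub> f = \<one>\<^bsub>perm_monoid {f. graph_aut V E f}\<^esub>"
      by auto
  qed
qed

lemma perm_monoid_update: "(perm_monoid A)\<lparr>carrier := B\<rparr> = perm_monoid B"
  unfolding perm_monoid_def by simp

theorem proposition4p1:
  fixes V :: "'a set" and E :: "'a \<Rightarrow> 'a \<Rightarrow> bool" and G :: "('a \<Rightarrow> 'a) set" and p :: nat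
  assumes "prime p"
    and "simple_graph V E"
    and "connected_graph V E"
    and "regular_graph V E p"
    and "arc_transitive_on E {f. graph_aut V E f}"
    and "subgroup G (perm_monoid {f. graph_aut V E f})"
    and "solvable (perm_monoid G)"
    and "arc_transitive_on E G"
  shows "EKR V G"
proof -
  note pr = assms(1) and sgr = assms(2) and cg = assms(3) and rg = assms(4) and sub = assms(6)
    and solv = assms(7) and at = assms(8)
  let ?P = "perm_monoid G"
  have grp: "group ?P"
    using subgroup.subgroup_is_group[OF sub aut_group] perm_monoid_update by metis
  have GA: "G \<subseteq> {f. graph_aut V E f}" using subgroup.subset[OF sub] by simp
  have gperm: "g permutes V" if "g \<in> G" for g using GA that unfolding graph_aut_def by blast
  have gE: "E u v \<longleftrightarrow> E (g u) (g v)" if "g \<in> G" for g u v using GA that unfolding graph_aut_def by blast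
  have finV: "finite V" using sgr unfolding simple_graph_def by blast
  have gsP: "gs ?P p V E (\<lambda>g v. g v)"
  proof (intro gs.intro gs_axioms.intro)
    show "group ?P" by (rule grp)
    show "prime p" by (rule pr)
    show "finite V" by (rule finV)
    show "V \<noteq> {}" using cg unfolding connected_graph_def by blast
    show "\<And>u v. E u v \<Longrightarrow> u \<in> V" using sgr unfolding simple_graph_def by blast
    show "\<And>u v. E u v \<Longrightarrow> v \<in> V" using sgr unfolding simple_graph_def by blast
    show "\<And>u v. E u v \<Longrightarrow> E v u" using sgr unfolding simple_graph_def by blast
    show "\<And>v. \<not> E v v" using sgr unfolding simple_graph_def by blast
    show "\<And>u v. u \<in> V \<Longrightarrow> v \<in> V \<Longrightarrow> E\<^sup>*\<^sup>* u v" using cg unfolding connected_graph_def by blast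
    show "\<And>v. v \<in> V \<Longrightarrow> card {w. E v w} = p" using rg unfolding regular_graph_def by blast
    show "\<And>g v. g \<in> carrier ?P \<Longrightarrow> v \<in> V \<Longrightarrow> g v \<in> V"
    proof -
      fix g v assume g: "g \<in> carrier ?P" and v: "v \<in> V"
      have "g permutes V" using gperm g by simp
      then show "g v \<in> V" using permutes_in_image v by metis
    qed
    show "\<And>g h v. g \<in> carrier ?P \<Longrightarrow> h \<in> carrier ?P \<Longrightarrow> v \<in> V \<Longrightarrow> (g \<otimes>\<^bsub>?P\<^esub> h) v = g (h v)" by simp
    show "\<And>v. v \<in> V \<Longrightarrow> \<one>\<^bsub>?P\<^esub> v = v" by simp
    show "\<And>g u v. g \<in> carrier ?P \<Longrightarrow> E u v \<Longrightarrow> E (g u) (g v)"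
    proof -
      fix g u v assume g: "g \<in> carrier ?P" and e: "E u v"
      have "g \<in> G" using g by simp
      then show "E (g u) (g v)" using gE[of g u v] e by blast
    qed
    show "\<And>u v u' v'. E u v \<Longrightarrow> E u' v' \<Longrightarrow> \<exists>g\<in>carrier ?P. g u = u' \<and> g v = v'"
    proof -
      fix u v u' v' assume e: "E u v" and e': "E u' v'"
      have "(u, v) \<in> arcs E" "(u', v') \<in> arcs E" using e e' unfolding arcs_def by auto
      then obtain g where "g \<in> G" "(g (fst (u, v)), g (snd (u, v))) = (u', v')"
        using at unfolding arc_transitive_on_def by blast
      then show "\<exists>g\<in>carrier ?P. g u = u' \<and> g v = v'" by auto
    qed
  qed
  interpret gs ?P p V E "\<lambda>g v. g v" by (rule gsP)
  have mcl: "a \<circ> b \<in> G" if "a \<in> G" "b \<in> G" for a b using m_closed[of a b] that by simp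
  have icl: "inv\<^bsub>?P\<^esub> a \<in> G" if "a \<in> G" for a using inv_closed[of a] that by simp
  obtain C where C: "isclique ?P V (\<lambda>g v. g v) C" using core[OF grp solv gsP] by blast
  have CG: "C \<subseteq> G" and Cc: "card C = card V" and Csep: "\<forall>c\<in>C. \<forall>d\<in>C. c \<noteq> d \<longrightarrow> (\<forall>v\<in>V. c v \<noteq> d v)"
    using C unfolding isclique_def by auto
  have finG: "finite G"
  proof (rule finite_subset[OF _ finite_permutations[OF finV]])
    show "G \<subseteq> {p. p permutes V}" using gperm by blast
  qed
  have stab: "card (stabilizer G v) * card V = card G" if v: "v \<in> V" for v
  proof -
    define fib where "fib = (\<lambda>w. {g \<in> G. g v = w})"
    have fibc: "card (fib w) = card (stabilizer G v)" if w: "w \<in> V" for w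
    proof -
      obtain h where h: "h \<in> G" "h v = w" using vtrans[OF v w] by auto
      have "fib w = (\<lambda>s. h \<otimes>\<^bsub>?P\<^esub> s) ` stabilizer G v"
      proof
        show "(\<lambda>s. h \<otimes>\<^bsub>?P\<^esub> s) ` stabilizer G v \<subseteq> fib w"
          unfolding fib_def stabilizer_def using h mcl by auto
        show "fib w \<subseteq> (\<lambda>s. h \<otimes>\<^bsub>?P\<^esub> s) ` stabilizer G v"
        proof
          fix f assume f: "f \<in> fib w"
          have fG: "f \<in> G" and fv: "f v = w" using f unfolding fib_def by auto
          define s where "s = inv\<^bsub>?P\<^esub> h \<otimes>\<^bsub>?P\<^esub> f"
          have hc: "h \<in> carrier ?P" using h by simp
          have sG: "s \<in> G" unfolding s_def using fG h(1) mcl icl by simp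
          have hs: "h \<otimes>\<^bsub>?P\<^esub> s = f" unfolding s_def
            by (rule inv_cancel_right_aux[OF hc], use fG in simp)
          have "h (s v) = h v" using hs fv h(2) by (metis comp_apply perm_monoid_simps(2))
          then have "s v = v" using act_inj[OF hc _ v] act_in[OF _ v] sG by auto
          then have "s \<in> stabilizer G v" unfolding stabilizer_def using sG by simp
          then show "f \<in> (\<lambda>s. h \<otimes>\<^bsub>?P\<^esub> s) ` stabilizer G v" using hs by blast
        qed
      qed
      moreover have "inj_on (\<lambda>s. h \<otimes>\<^bsub>?P\<^esub> s) (stabilizer G v)"
      proof (rule inj_onI)
        fix a b assume a: "a \<in> stabilizer G v" and b: "b \<in> stabilizer G v" and e: "h \<otimes>\<^bsub>?P\<^esub> a = h \<otimes>\<^bsub>?P\<^esub> b"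
        have ac: "a \<in> carrier ?P" and bc: "b \<in> carrier ?P" using a b unfolding stabilizer_def by auto
        have hc: "h \<in> carrier ?P" using h by simp
        show "a = b" using inv_cancel_left_aux[OF hc ac] inv_cancel_left_aux[OF hc bc] e by metis
      qed
      ultimately show ?thesis by (simp add: card_image)
    qed
    have Gu: "G = (\<Union>w\<in>V. fib w)"
    proof
      show "G \<subseteq> (\<Union>w\<in>V. fib w)"
      proof
        fix g assume g: "g \<in> G"
        have "g v \<in> V" using act_in[of g v] g v by simp
        moreover have "g \<in> fib (g v)" unfolding fib_def using g by simp
        ultimately show "g \<in> (\<Union>w\<in>V. fib w)" by blast
      qed
      show "(\<Union>w\<in>V. fib w) \<subseteq> G" unfolding fib_def by blast
    qed
    have "card (\<Union>w\<in>V. fib w) = (\<Sum>w\<in>V. card (fib w))"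
    proof (rule card_UN_disjoint[OF finV])
      show "\<forall>i\<in>V. finite (fib i)" unfolding fib_def using finG by simp
      show "\<forall>i\<in>V. \<forall>j\<in>V. i \<noteq> j \<longrightarrow> fib i \<inter> fib j = {}" unfolding fib_def by blast
    qed
    then have "card G = (\<Sum>w\<in>V. card (fib w))" using Gu by simp
    also have "\<dots> = (\<Sum>w\<in>V. card (stabilizer G v))" using fibc by simp
    finally show ?thesis by simp
  qed
  obtain v0 where v0: "v0 \<in> V" using ne by blast
  define s0 where "s0 = card (stabilizer G v0)"
  have Vpos: "card V > 0" using finV v0 card_gt_0_iff by blast
  have stab_eq: "card (stabilizer G v) = s0" if v: "v \<in> V" for v
  proof -
    have "card (stabilizer G v) * card V = card (stabilizer G v0) * card V" using stab[OF v] stab[OF v0] by simp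
    then show ?thesis using Vpos s0_def by simp
  qed
  have bound: "card F \<le> s0" if FG: "F \<subseteq> G" and Fi: "intersecting V F" for F
  proof -
    define phi where "phi = (\<lambda>(f, c). inv\<^bsub>?P\<^esub> c \<otimes>\<^bsub>?P\<^esub> f)"
    have "inj_on phi (F \<times> C)"
    proof (rule inj_onI)
      fix a b assume a: "a \<in> F \<times> C" and b: "b \<in> F \<times> C" and e: "phi a = phi b"
      obtain f c where a': "a = (f, c)" "f \<in> F" "c \<in> C" using a by blast
      obtain f' c' where b': "b = (f', c')" "f' \<in> F" "c' \<in> C" using b by blast
      have fc: "f \<in> carrier ?P" "f' \<in> carrier ?P" using a'(2) b'(2) FG by auto
      have cc: "c \<in> carrier ?P" "c' \<in> carrier ?P" using a'(3) b'(3) CG by auto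
      define g where "g = inv\<^bsub>?P\<^esub> c \<otimes>\<^bsub>?P\<^esub> f"
      have gc: "g \<in> carrier ?P" unfolding g_def using fc cc mcl icl by simp
      have g': "g = inv\<^bsub>?P\<^esub> c' \<otimes>\<^bsub>?P\<^esub> f'" using e a'(1) b'(1) g_def phi_def by simp
      have f1: "f = c \<otimes>\<^bsub>?P\<^esub> g" unfolding g_def by (rule inv_cancel_right_aux[OF cc(1) fc(1), symmetric])
      have f2: "f' = c' \<otimes>\<^bsub>?P\<^esub> g" unfolding g' by (rule inv_cancel_right_aux[OF cc(2) fc(2), symmetric])
      obtain v where v: "v \<in> V" "f v = f' v" using Fi a'(2) b'(2) unfolding intersecting_def by blast
      have gv: "g v \<in> V" using act_in[OF gc v(1)] .
      have "c (g v) = c' (g v)" using v(2) f1 f2 by (metis comp_apply perm_monoid_simps(2))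
      then have "c = c'" using Csep a'(3) b'(3) gv by blast
      then have "f = f'" using f1 f2 by simp
      then show "a = b" using a'(1) b'(1) \<open>c = c'\<close> by simp
    qed
    moreover have "phi ` (F \<times> C) \<subseteq> G"
    proof
      fix x assume "x \<in> phi ` (F \<times> C)"
      then obtain f c where fc: "f \<in> F" "c \<in> C" "x = phi (f, c)" by blast
      have "f \<in> G" "c \<in> G" using fc FG CG by auto
      then have "inv\<^bsub>?P\<^esub> c \<circ> f \<in> G" using mcl icl by blast
      then show "x \<in> G" unfolding phi_def using fc(3) phi_def by simp
    qed
    ultimately have "card (F \<times> C) \<le> card G" using card_inj_on_le finG by blast
    then have "card F * card V \<le> s0 * card V" using Cc stab[OF v0] s0_def by (simp add: card_cartesian_product)
    then show ?thesis using Vpos by simp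
  qed
  have stabI: "stabilizer G v0 \<subseteq> G \<and> intersecting V (stabilizer G v0)"
    unfolding stabilizer_def intersecting_def using v0 by (auto intro!: bexI[of _ v0])
  have A: "Max {card F | F. F \<subseteq> G \<and> intersecting V F} = s0"
  proof (rule Max_eqI)
    have "{card F | F. F \<subseteq> G \<and> intersecting V F} \<subseteq> card ` Pow G" by blast
    then show "finite {card F | F. F \<subseteq> G \<and> intersecting V F}" using finG finite_subset by blast
    show "\<And>y. y \<in> {card F | F. F \<subseteq> G \<and> intersecting V F} \<Longrightarrow> y \<le> s0" using bound by blast
    show "s0 \<in> {card F | F. F \<subseteq> G \<and> intersecting V F}" using stabI s0_def by blast
  qed
  have B: "{card (stabilizer G v) | v. v \<in> V} = {s0}" using stab_eq v0 by blast
  show ?thesis unfolding EKR_def A B by simp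
qed

end
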